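(* Let $\Gamma$ be a finite ranked poset, $A'=A'_\Gamma$, and let $\hat C_\bullet$ and the maps $d:A'\otimes_{\mathbb{F}}\hat C_n\to A'\otimes_{\mathbb{F}}\hat C_{n-1}$ ($n\ge 0$) be as defined in the context. Then $d\circ d=0$, so $(A'\otimes\hat C_\bullet,d)$ is a chain complex of free left $A'$-modules.
   Context: Fix a field $\mathbb{F}$. A finite ranked poset is a finite poset $\Gamma$ (strict order $<$) with unique minimal element $*$ such that for each $x$ all maximal chains in $[*,x]$ have the same length $rk(x)$; $\Gamma_+=\Gamma\setminus\{*\}$, $d(x,y)=rk(x)-rk(y)$ for $y<x$. $x\to y$ ($x$ covers $y$) if $y<x$, $d(x,y)=1$; these are edges. $W$ is the $\mathbb{F}$-space with basis the edges, $T(W)$ the free algebra. For a path $\pi$: $b=c_0\to\cdots\to c_n=a$ with edges $e_1,\dots,e_n$, $e(\pi,j)$ is defined by $(s-e_1)\cdots(s-e_n)=\sum_j e(\pi,j)s^{n-j}$ ($s$ central). $A_\Gamma=T(W)/I$ with $I$ generated by $e(\pi,j)-e(\pi',j)$ for all pairs of paths $\pi,\pi'$ with the same endpoints $a<b$ and $0\le j\le d(b,a)$; edges have degree 1. An edge $x\to y$ has rank $rk(x)$; $F^mA_\Gamma$ is spanned by images of products of edges with rank sum $\le m$, and $A'=\bigoplus_m F^mA_\Gamma/F^{m-1}A_\Gamma$. For each $x\in\Gamma_+$ fix one distinguished edge $x\to y$, and let $\pi_x$ be the path from $x$ to $*$ following distinguished edges. For $1\le j\le rk(x)$, $e'(x,j)\in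 A'$ is the class in $F^mA_\Gamma/F^{m-1}A_\Gamma$, $m=j\,rk(x)-j(j-1)/2$, of the product $e_1e_2\cdots e_j$ of the first $j$ edges of $\pi_x$. For $a<b$ in $\Gamma$ set $f(b,a)=e'(b,d(b,a))$. For $b\in\Gamma$ and $1\le q\le rk(b)$, $\Gamma_{b,q}=\{a: *<a<b,\ d(b,a)\le q-1\}$. Let $C_\bullet(b,q)$ be the reduced simplicial chain complex of the order complex of $\Gamma_{b,q}$: for $n\ge0$, $C_n(b,q)$ has basis the symbols $[b_n>\cdots>b_0]_{b,q}$ for strict chains in $\Gamma_{b,q}$, and $C_{-1}(b,q)=\mathbb{F}$ with basis $[\,]_{b,q}$; the differential is $\delta[b_n>\cdots>b_0]_{b,q}=\sum_{i=0}^n(-1)^i[b_n>\cdots>\widehat{b_{n-i}}>\cdots>b_0]_{b,q}$ (so $\delta[b_0]_{b,q}=[\,]_{b,q}$). Put $\hat C_n=\bigoplus_{b\in\Gamma_+}\bigoplus_{1\le q\le rk(b)}C_n(b,q)$ with differential $\hat\delta=\bigoplus\delta$. Define $A'$-linear maps $d:A'\otimes\hat C_n\to A'\otimes\hat C_{n-1}$ for $n\ge0$ by: for $m\in A'$ and a basis chain with $k=d(b,b_n)$, $d(m\otimes[b_n>\cdots>b_0]_{b,q})=m\,f(b,b_n)\otimes[b_{n-1}>\cdots>b_0]_{b_n,q-k}-m\otimes\hat\delta([b_n>\cdots>b_0]_{b,q})$. *)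

theory Defs
  imports Main
begin

text \<open>A poset is given by a carrier G, a strict order lt on it, and the minimal element s (= *).\<close>

definition interval_below :: "'v set \<Rightarrow> ('v \<Rightarrow> 'v \<Rightarrow> bool) \<Rightarrow> 'v \<Rightarrow> 'v \<Rightarrow> 'v set" where
  "interval_below G lt s x = {z \<in> G. (z = s \<or> lt s z) \<and> (z = x \<or> lt z x)}"

definition is_chain_in :: "('v \<Rightarrow> 'v \<Rightarrow> bool) \<Rightarrow> 'v set \<Rightarrow> 'v set \<Rightarrow> bool" where
  "is_chain_in lt S C \<longleftrightarrow> C \<subseteq> S \<and> (\<forall>a\<in>C. \<forall>b\<in>C. a = b \<or> lt a b \<or> lt b a)"

definition is_maxchain_in :: "('v \<Rightarrow> 'v \<Rightarrow> bool) \<Rightarrow> 'v set \<Rightarrow> 'v set \<Rightarrow> bool" where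
  "is_maxchain_in lt S C \<longleftrightarrow> is_chain_in lt S C \<and> (\<forall>D. is_chain_in lt S D \<and> C \<subseteq> D \<longrightarrow> D = C)"

definition finite_ranked_poset :: "'v set \<Rightarrow> ('v \<Rightarrow> 'v \<Rightarrow> bool) \<Rightarrow> 'v \<Rightarrow> bool" where
  "finite_ranked_poset G lt s \<longleftrightarrow>
     finite G \<and>
     (\<forall>x\<in>G. \<not> lt x x) \<and>
     (\<forall>x\<in>G. \<forall>y\<in>G. \<forall>z\<in>G. lt x y \<longrightarrow> lt y z \<longrightarrow> lt x z) \<and>
     s \<in> G \<and> (\<forall>y\<in>G. \<not> lt y s) \<and>
     (\<forall>m\<in>G. (\<forall>y\<in>G. \<not> lt y m) \<longrightarrow> m = s) \<and>
     (\<forall>x\<in>G. \<forall>C1 C2. is_maxchain_in lt (interval_below G lt s x) C1 \<longrightarrow>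
                       is_maxchain_in lt (interval_below G lt s x) C2 \<longrightarrow> card C1 = card C2)"

text \<open>rk x = length (= cardinality minus one) of a maximal chain in [*,x].\<close>
definition rk :: "'v set \<Rightarrow> ('v \<Rightarrow> 'v \<Rightarrow> bool) \<Rightarrow> 'v \<Rightarrow> 'v \<Rightarrow> nat" where
  "rk G lt s x = (SOME n. \<exists>C. is_maxchain_in lt (interval_below G lt s x) C \<and> card C = Suc n)"

definition rdist :: "'v set \<Rightarrow> ('v \<Rightarrow> 'v \<Rightarrow> bool) \<Rightarrow> 'v \<Rightarrow> 'v \<Rightarrow> 'v \<Rightarrow> nat" where
  "rdist G lt s b a = rk G lt s b - rk G lt s a"

definition covers :: "'v set \<Rightarrow> ('v \<Rightarrow> 'v \<Rightarrow> bool) \<Rightarrow> 'v \<Rightarrow> 'v \<Rightarrow> 'v \<Rightarrow> bool" where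
  "covers G lt s x y \<longleftrightarrow> x \<in> G \<and> y \<in> G \<and> lt y x \<and> rdist G lt s x y = 1"

definition edges :: "'v set \<Rightarrow> ('v \<Rightarrow> 'v \<Rightarrow> bool) \<Rightarrow> 'v \<Rightarrow> ('v \<times> 'v) set" where
  "edges G lt s = {(x, y). covers G lt s x y}"

section \<open>The free algebra T(W): finitely supported functions on words of edges\<close>

definition in_TW :: "'e set \<Rightarrow> ('e list \<Rightarrow> 'a::zero) \<Rightarrow> bool" where
  "in_TW E p \<longleftrightarrow> finite {w. p w \<noteq> 0} \<and> (\<forall>w. p w \<noteq> 0 \<longrightarrow> set w \<subseteq> E)"

definition tmono :: "'e list \<Rightarrow> ('e list \<Rightarrow> 'a::{zero,one})" where
  "tmono u = (\<lambda>w. if w = u then 1 else 0)"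

definition tmul :: "('e list \<Rightarrow> 'a::semiring_0) \<Rightarrow> ('e list \<Rightarrow> 'a) \<Rightarrow> ('e list \<Rightarrow> 'a)" where
  "tmul p q = (\<lambda>w. \<Sum>i\<in>{0..length w}. p (take i w) * q (drop i w))"

text \<open>e(pi,j): coefficient of s^(n-j) in (s-e_1)...(s-e_n).\<close>
definition esym :: "'e list \<Rightarrow> nat \<Rightarrow> ('e list \<Rightarrow> 'a::comm_ring_1)" where
  "esym es j = (\<lambda>w. (-1) ^ j *
      of_nat (card {S. S \<subseteq> {..<length es} \<and> card S = j \<and> nths es S = w}))"

definition is_path :: "'v set \<Rightarrow> ('v \<Rightarrow> 'v \<Rightarrow> bool) \<Rightarrow> 'v \<Rightarrow> 'v list \<Rightarrow> 'v \<Rightarrow> 'v \<Rightarrow> bool" where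
  "is_path G lt s cs b a \<longleftrightarrow> cs \<noteq> [] \<and> hd cs = b \<and> last cs = a \<and>
     (\<forall>i. Suc i < length cs \<longrightarrow> covers G lt s (cs ! i) (cs ! Suc i))"

definition path_edges :: "'v list \<Rightarrow> ('v \<times> 'v) list" where
  "path_edges cs = zip cs (tl cs)"

definition rels :: "'v set \<Rightarrow> ('v \<Rightarrow> 'v \<Rightarrow> bool) \<Rightarrow> 'v \<Rightarrow> (('v \<times> 'v) list \<Rightarrow> 'a::comm_ring_1) set" where
  "rels G lt s = {(\<lambda>w. esym (path_edges p) j w - esym (path_edges p') j w) | a b p p' j.
      a \<in> G \<and> b \<in> G \<and> lt a b \<and> is_path G lt s p b a \<and> is_path G lt s p' b a \<and>
      j \<le> rdist G lt s b a}"

inductive_set two_sided_ideal :: "'e set \<Rightarrow> ('e list \<Rightarrow> 'a::comm_ring_1) set \<Rightarrow> ('e list \<Rightarrow> 'a) set"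
  for E R where
  gen: "r \<in> R \<Longrightarrow> r \<in> two_sided_ideal E R"
| zero: "(\<lambda>_. 0) \<in> two_sided_ideal E R"
| add: "x \<in> two_sided_ideal E R \<Longrightarrow> y \<in> two_sided_ideal E R \<Longrightarrow> (\<lambda>w. x w + y w) \<in> two_sided_ideal E R"
| lmul: "in_TW E p \<Longrightarrow> x \<in> two_sided_ideal E R \<Longrightarrow> tmul p x \<in> two_sided_ideal E R"
| rmul: "in_TW E p \<Longrightarrow> x \<in> two_sided_ideal E R \<Longrightarrow> tmul x p \<in> two_sided_ideal E R"

definition AI :: "'v set \<Rightarrow> ('v \<Rightarrow> 'v \<Rightarrow> bool) \<Rightarrow> 'v \<Rightarrow> (('v \<times> 'v) list \<Rightarrow> 'a::comm_ring_1) set" where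
  "AI G lt s = two_sided_ideal (edges G lt s) (rels G lt s)"

definition word_rank :: "'v set \<Rightarrow> ('v \<Rightarrow> 'v \<Rightarrow> bool) \<Rightarrow> 'v \<Rightarrow> ('v \<times> 'v) list \<Rightarrow> nat" where
  "word_rank G lt s w = (\<Sum>e\<leftarrow>w. rk G lt s (fst e))"

text \<open>Preimage in T(W) of F^m A_Gamma (m may be -1, giving the ideal I).\<close>
definition Fil :: "'v set \<Rightarrow> ('v \<Rightarrow> 'v \<Rightarrow> bool) \<Rightarrow> 'v \<Rightarrow> int \<Rightarrow> (('v \<times> 'v) list \<Rightarrow> 'a::comm_ring_1) set" where
  "Fil G lt s m = {x. in_TW (edges G lt s) x \<and>
      (\<exists>y\<in>AI G lt s. \<forall>w. x w - y w \<noteq> 0 \<longrightarrow> int (word_rank G lt s w) \<le> m)}"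

text \<open>Elements of A' are represented by families g, g m a representative in T(W) of the
  degree-m component in F^m/F^(m-1); Aeq is equality in A'.\<close>
type_synonym ('v, 'a) Arep = "nat \<Rightarrow> ('v \<times> 'v) list \<Rightarrow> 'a"

definition is_Arep :: "'v set \<Rightarrow> ('v \<Rightarrow> 'v \<Rightarrow> bool) \<Rightarrow> 'v \<Rightarrow> ('v, 'a::comm_ring_1) Arep \<Rightarrow> bool" where
  "is_Arep G lt s g \<longleftrightarrow> (\<forall>m. g m \<in> Fil G lt s (int m)) \<and> finite {m. g m \<noteq> (\<lambda>_. 0)}"

definition Aeq :: "'v set \<Rightarrow> ('v \<Rightarrow> 'v \<Rightarrow> bool) \<Rightarrow> 'v \<Rightarrow> ('v, 'a::comm_ring_1) Arep \<Rightarrow> ('v, 'a) Arep \<Rightarrow> bool" where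
  "Aeq G lt s g h \<longleftrightarrow> (\<forall>m. (\<lambda>w. g m w - h m w) \<in> Fil G lt s (int m - 1))"

definition azero :: "('v, 'a::zero) Arep" where
  "azero = (\<lambda>m w. 0)"

definition aone :: "('v, 'a::{zero,one}) Arep" where
  "aone = (\<lambda>m. if m = 0 then tmono [] else (\<lambda>_. 0))"

definition aadd :: "('v, 'a::plus) Arep \<Rightarrow> ('v, 'a) Arep \<Rightarrow> ('v, 'a) Arep" where
  "aadd g h = (\<lambda>m w. g m w + h m w)"

definition amul :: "('v, 'a::semiring_0) Arep \<Rightarrow> ('v, 'a) Arep \<Rightarrow> ('v, 'a) Arep" where
  "amul g h = (\<lambda>m w. \<Sum>i\<le>m. tmul (g i) (h (m - i)) w)"

text \<open>First j edges of the distinguished path pi_x.\<close>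
definition dpath_edges :: "('v \<Rightarrow> 'v) \<Rightarrow> 'v \<Rightarrow> nat \<Rightarrow> ('v \<times> 'v) list" where
  "dpath_edges dist x j = map (\<lambda>i. ((dist ^^ i) x, (dist ^^ Suc i) x)) [0..<j]"

definition eprime :: "'v set \<Rightarrow> ('v \<Rightarrow> 'v \<Rightarrow> bool) \<Rightarrow> 'v \<Rightarrow> ('v \<Rightarrow> 'v) \<Rightarrow> 'v \<Rightarrow> nat \<Rightarrow> ('v, 'a::comm_ring_1) Arep" where
  "eprime G lt s dist x j =
     (\<lambda>m. if m = j * rk G lt s x - j * (j - 1) div 2 then tmono (dpath_edges dist x j) else (\<lambda>_. 0))"

definition fA :: "'v set \<Rightarrow> ('v \<Rightarrow> 'v \<Rightarrow> bool) \<Rightarrow> 'v \<Rightarrow> ('v \<Rightarrow> 'v) \<Rightarrow> 'v \<Rightarrow> 'v \<Rightarrow> ('v, 'a::comm_ring_1) Arep" where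
  "fA G lt s dist b a = eprime G lt s dist b (rdist G lt s b a)"

definition Gamma_bq :: "'v set \<Rightarrow> ('v \<Rightarrow> 'v \<Rightarrow> bool) \<Rightarrow> 'v \<Rightarrow> 'v \<Rightarrow> nat \<Rightarrow> 'v set" where
  "Gamma_bq G lt s b q = {a \<in> G. lt s a \<and> lt a b \<and> rdist G lt s b a \<le> q - 1}"

text \<open>Basis element (b, q, [b_n, ..., b_0]) of C_n(b,q) inside hat C_n (the empty list is [ ]_{b,q}).\<close>
definition is_basis_chain :: "'v set \<Rightarrow> ('v \<Rightarrow> 'v \<Rightarrow> bool) \<Rightarrow> 'v \<Rightarrow> 'v \<times> nat \<times> 'v list \<Rightarrow> bool" where
  "is_basis_chain G lt s c = (case c of (b, q, cs) \<Rightarrow>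
     b \<in> G \<and> b \<noteq> s \<and> 1 \<le> q \<and> q \<le> rk G lt s b \<and>
     sorted_wrt (\<lambda>x y. lt y x) cs \<and> set cs \<subseteq> Gamma_bq G lt s b q)"

definition del_at :: "nat \<Rightarrow> 'v list \<Rightarrow> 'v list" where
  "del_at i cs = take i cs @ drop (Suc i) cs"

text \<open>Coefficient in A' of basis chain c' in d(1 \<otimes> c), for a chain c of degree \<ge> 0.\<close>
definition dcoef :: "'v set \<Rightarrow> ('v \<Rightarrow> 'v \<Rightarrow> bool) \<Rightarrow> 'v \<Rightarrow> ('v \<Rightarrow> 'v) \<Rightarrow>
    'v \<times> nat \<times> 'v list \<Rightarrow> 'v \<times> nat \<times> 'v list \<Rightarrow> ('v, 'a::comm_ring_1) Arep" where
  "dcoef G lt s dist c c' = (case c of (b, q, cs) \<Rightarrow>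
     aadd (if c' = (hd cs, q - rdist G lt s b (hd cs), tl cs) then fA G lt s dist b (hd cs) else azero)
          (\<lambda>m w. \<Sum>i<length cs. if c' = (b, q, del_at i cs) then - ((-1) ^ i * aone m w) else 0))"

text \<open>The A'-linear map d on A' \<otimes> hat C, elements given as finitely supported coefficient functions.\<close>
definition Dmap :: "'v set \<Rightarrow> ('v \<Rightarrow> 'v \<Rightarrow> bool) \<Rightarrow> 'v \<Rightarrow> ('v \<Rightarrow> 'v) \<Rightarrow>
    ('v \<times> nat \<times> 'v list \<Rightarrow> ('v, 'a::comm_ring_1) Arep) \<Rightarrow> ('v \<times> nat \<times> 'v list \<Rightarrow> ('v, 'a) Arep)" where
  "Dmap G lt s dist x = (\<lambda>c' m w. \<Sum>c\<in>{c. x c \<noteq> azero}. amul (x c) (dcoef G lt s dist c c') m w)"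

end

theory Submission
  imports Defs
begin


lemma suffix_iff: "(length u \<le> length w \<and> drop (length w - length u) w = u) \<longleftrightarrow> (\<exists>x. w = x @ u)"
  by (metis append_eq_conv_conj append_take_drop_id diff_add_inverse2 diff_le_self length_append length_drop le_add2)

lemma take_suffix: "w = x @ u \<Longrightarrow> take (length w - length u) w = x"
  by simp

lemma tmul_tmono_right:
  fixes p :: "'e list \<Rightarrow> 'a::comm_ring_1"
  shows "tmul p (tmono u) w = (if \<exists>x. w = x @ u then p (take (length w - length u) w) else 0)"
proof -
  have "tmul p (tmono u) w = (\<Sum>i\<in>{0..length w}. if i = length w - length u then
      (if length u \<le> length w \<and> drop (length w - length u) w = u then p (take (length w - length u) w) else 0) else 0)"
    unfolding tmul_def tmono_def
  proof (rule sum.cong[OF refl])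
    fix i assume i: "i \<in> {0..length w}"
    show "p (take i w) * (if drop i w = u then 1 else 0) = (if i = length w - length u then
      (if length u \<le> length w \<and> drop (length w - length u) w = u then p (take (length w - length u) w) else 0) else 0)"
    proof (cases "drop i w = u")
      case True
      then have "length u = length w - i" by auto
      with i True show ?thesis by auto
    next
      case False
      then show ?thesis using i by auto
    qed
  qed
  also have "\<dots> = (if length u \<le> length w \<and> drop (length w - length u) w = u then p (take (length w - length u) w) else 0)"
    by (subst sum.delta) auto
  finally show ?thesis unfolding suffix_iff .
qed

lemma tmul_tmono_tmono: "tmul (tmono a) (tmono b) = (tmono (a @ b) :: 'e list \<Rightarrow> 'a::comm_ring_1)"
proof
  fix w
  show "tmul (tmono a) (tmono b) w = (tmono (a @ b) :: 'e list \<Rightarrow> 'a::comm_ring_1) w"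
    unfolding tmul_tmono_right by (auto simp: tmono_def)
qed

lemma tmul_mono_mono:
  fixes p :: "'e list \<Rightarrow> 'a::comm_ring_1"
  shows "tmul (tmul p (tmono u)) (tmono v) = tmul p (tmono (u @ v))"
proof
  fix w
  show "tmul (tmul p (tmono u)) (tmono v) w = tmul p (tmono (u @ v)) w"
  proof (cases "\<exists>x. w = x @ u @ v")
    case True
    then obtain x where "w = x @ u @ v" by auto
    then show ?thesis unfolding tmul_tmono_right by auto
  next
    case False
    then show ?thesis unfolding tmul_tmono_right by auto
  qed
qed


context
  fixes dummy :: "'a::comm_ring_1"
begin
end

lemma tmul_add_left: "tmul (\<lambda>w. p w + q w) r w = tmul p r w + (tmul q r w :: 'a::comm_ring_1)"
  unfolding tmul_def by (simp add: distrib_right sum.distrib)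
lemma tmul_add_right: "tmul r (\<lambda>w. p w + q w) w = tmul r p w + (tmul r q w :: 'a::comm_ring_1)"
  unfolding tmul_def by (simp add: distrib_left sum.distrib)
lemma tmul_diff_left: "tmul (\<lambda>w. p w - q w) r w = tmul p r w - (tmul q r w :: 'a::comm_ring_1)"
  unfolding tmul_def by (simp add: left_diff_distrib sum_subtractf)
lemma tmul_diff_right: "tmul r (\<lambda>w. p w - q w) w = tmul r p w - (tmul r q w :: 'a::comm_ring_1)"
  unfolding tmul_def by (simp add: right_diff_distrib sum_subtractf)
lemma tmul_zero_left: "tmul (\<lambda>w. 0) r w = (0::'a::comm_ring_1)"
  unfolding tmul_def by simp
lemma tmul_zero_right: "tmul r (\<lambda>w. 0) w = (0::'a::comm_ring_1)"
  unfolding tmul_def by simp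
lemma tmul_const_left: "tmul (\<lambda>w. if w = [] then a else 0) r w = a * (r w :: 'a::comm_ring_1)"
proof -
  have "tmul (\<lambda>w. if w = [] then a else 0) r w = (\<Sum>i\<in>{0..length w}. if i = 0 then a * r w else 0)"
    unfolding tmul_def by (rule sum.cong) auto
  then show ?thesis by simp
qed
lemma tmul_empty_right: "tmul p (tmono []) w = (p w :: 'a::comm_ring_1)"
  unfolding tmul_tmono_right by simp

lemma amul_add_right: "amul g (\<lambda>m w. h1 m w + h2 m w) m w = amul g h1 m w + (amul g h2 m w :: 'a::comm_ring_1)"
  unfolding amul_def by (simp add: tmul_add_right sum.distrib)
lemma amul_diff_right: "amul g (\<lambda>m w. h1 m w - h2 m w) m w = amul g h1 m w - (amul g h2 m w :: 'a::comm_ring_1)"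
  unfolding amul_def by (simp add: tmul_diff_right sum_subtractf)
lemma amul_add_left: "amul (\<lambda>m w. h1 m w + h2 m w) g m w = amul h1 g m w + (amul h2 g m w :: 'a::comm_ring_1)"
  unfolding amul_def by (simp add: tmul_add_left sum.distrib)
lemma amul_diff_left: "amul (\<lambda>m w. h1 m w - h2 m w) g m w = amul h1 g m w - (amul h2 g m w :: 'a::comm_ring_1)"
  unfolding amul_def by (simp add: tmul_diff_left sum_subtractf)
lemma amul_sum_right: "amul g (\<lambda>m w. \<Sum>i\<in>I. h i m w) m w = (\<Sum>i\<in>I. amul g (h i) m w :: 'a::comm_ring_1)"
  unfolding amul_def tmul_def by (simp add: sum_distrib_left sum.swap[of _ I])
lemma amul_sum_left: "amul (\<lambda>m w. \<Sum>i\<in>I. h i m w) g m w = (\<Sum>i\<in>I. amul (h i) g m w :: 'a::comm_ring_1)"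
  unfolding amul_def tmul_def by (simp add: sum_distrib_right sum.swap[of _ I])
lemma amul_if_right: "amul g (\<lambda>m w. if P then h m w else 0) m w = (if P then amul g h m w else (0::'a::comm_ring_1))"
  by (cases P) (simp_all add: amul_def tmul_def)
lemma amul_if_left: "amul (\<lambda>m w. if P then h m w else 0) g m w = (if P then amul h g m w else (0::'a::comm_ring_1))"
  by (cases P) (simp_all add: amul_def tmul_def)
lemma amul_scal_right: "amul g (\<lambda>m w. a * h m w) m w = a * (amul g h m w :: 'a::comm_ring_1)"
  unfolding amul_def tmul_def by (simp add: sum_distrib_left mult_ac)
lemma amul_scal_left: "amul (\<lambda>m w. a * h m w) g m w = a * (amul h g m w :: 'a::comm_ring_1)"
  unfolding amul_def tmul_def by (simp add: sum_distrib_left mult_ac)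
lemma amul_zero_left: "amul (\<lambda>m w. 0) g m w = (0 :: 'a::comm_ring_1)"
  unfolding amul_def tmul_def by simp
lemma amul_azero_left: "amul azero g m w = (0 :: 'a::comm_ring_1)"
  unfolding amul_def tmul_def azero_def by simp
lemma amul_aone_right: "amul g aone m w = (g m w :: 'a::comm_ring_1)"
proof -
  have "amul g aone m w = (\<Sum>i\<le>m. if i = m then g m w else 0)"
    unfolding amul_def
  proof (rule sum.cong[OF refl])
    fix i assume "i \<in> {..m}"
    then show "tmul (g i) (aone (m - i)) w = (if i = m then g m w else 0)"
      by (auto simp: aone_def tmul_empty_right tmul_zero_right)
  qed
  then show ?thesis by simp
qed
lemma amul_mono_right:
  "amul g (\<lambda>m. if m = d then tmono u else (\<lambda>_. 0)) m w =
     (if d \<le> m then tmul (g (m - d)) (tmono u) w else (0::'a::comm_ring_1))"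
proof -
  have "amul g (\<lambda>m. if m = d then tmono u else (\<lambda>_. 0)) m w =
     (\<Sum>i\<le>m. if i = m - d then (if d \<le> m then tmul (g (m - d)) (tmono u) w else 0) else 0)"
    unfolding amul_def
  proof (rule sum.cong[OF refl])
    fix i assume "i \<in> {..m}"
    then show "tmul (g i) (if m - i = d then tmono u else (\<lambda>_. 0)) w =
      (if i = m - d then (if d \<le> m then tmul (g (m - d)) (tmono u) w else 0) else 0)"
      by (auto simp: tmul_zero_right)
  qed
  then show ?thesis by simp
qed


lemma tmul_nonzero:
  fixes p q :: "'e list \<Rightarrow> 'a::comm_ring_1"
  assumes "tmul p q w \<noteq> 0"
  obtains i where "i \<le> length w" "p (take i w) \<noteq> 0" "q (drop i w) \<noteq> 0"
proof -
  from assms obtain i where "i \<in> {0..length w}" "p (take i w) * q (drop i w) \<noteq> 0"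
    unfolding tmul_def by (meson sum.not_neutral_contains_not_neutral)
  then have "i \<le> length w" "p (take i w) \<noteq> 0" "q (drop i w) \<noteq> 0" by auto
  then show ?thesis by (rule that)
qed

lemma in_TW_tmul:
  fixes p q :: "'e list \<Rightarrow> 'a::comm_ring_1"
  assumes p: "in_TW E p" and q: "in_TW E q"
  shows "in_TW E (tmul p q)"
proof -
  have sub: "{w. tmul p q w \<noteq> 0} \<subseteq> (\<lambda>(a,b). a @ b) ` ({w. p w \<noteq> 0} \<times> {w. q w \<noteq> 0})"
  proof
    fix w assume "w \<in> {w. tmul p q w \<noteq> 0}"
    then have "tmul p q w \<noteq> 0" by simp
    then obtain i where i: "p (take i w) \<noteq> 0" "q (drop i w) \<noteq> 0"
      by (rule tmul_nonzero)
    have "(take i w, drop i w) \<in> {w. p w \<noteq> 0} \<times> {w. q w \<noteq> 0}" using i by simp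
    moreover have "w = (\<lambda>(a,b). a @ b) (take i w, drop i w)" by simp
    ultimately show "w \<in> (\<lambda>(a,b). a @ b) ` ({w. p w \<noteq> 0} \<times> {w. q w \<noteq> 0})"
      by (rule rev_image_eqI)
  qed
  have "finite ({w. p w \<noteq> 0} \<times> {w. q w \<noteq> 0})"
    using p q unfolding in_TW_def by simp
  then have fin: "finite {w. tmul p q w \<noteq> 0}"
    by (intro finite_subset[OF sub] finite_imageI)
  have "set w \<subseteq> E" if nz: "tmul p q w \<noteq> 0" for w
  proof -
    obtain i where "p (take i w) \<noteq> 0" "q (drop i w) \<noteq> 0"
      using tmul_nonzero[OF nz] by blast
    then have "set (take i w) \<subseteq> E" "set (drop i w) \<subseteq> E" using p q unfolding in_TW_def by auto
    moreover have "set w = set (take i w) \<union> set (drop i w)"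
      by (subst append_take_drop_id[symmetric, of w i], subst set_append) simp
    ultimately show ?thesis by simp
  qed
  then show ?thesis using fin unfolding in_TW_def by auto
qed

lemma in_TW_diff:
  fixes p q :: "'e list \<Rightarrow> 'a::comm_ring_1"
  assumes p: "in_TW E p" and q: "in_TW E q"
  shows "in_TW E (\<lambda>w. p w - q w)"
proof -
  have "{w. p w - q w \<noteq> 0} \<subseteq> {w. p w \<noteq> 0} \<union> {w. q w \<noteq> 0}" by auto
  then show ?thesis using p q unfolding in_TW_def by (auto intro: finite_subset)
qed

lemma in_TW_add:
  fixes p q :: "'e list \<Rightarrow> 'a::comm_ring_1"
  assumes p: "in_TW E p" and q: "in_TW E q"
  shows "in_TW E (\<lambda>w. p w + q w)"
proof -
  have "{w. p w + q w \<noteq> 0} \<subseteq> {w. p w \<noteq> 0} \<union> {w. q w \<noteq> 0}" by auto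
  then show ?thesis using p q unfolding in_TW_def by (auto intro: finite_subset)
qed

lemma in_TW_zero: "in_TW E (\<lambda>w. 0::'a::comm_ring_1)"
  unfolding in_TW_def by auto

lemma in_TW_const: "in_TW E (\<lambda>w. if w = [] then a else (0::'a::comm_ring_1))"
proof -
  have "{w. (if w = [] then a else 0) \<noteq> 0} \<subseteq> {[]}" by auto
  then show ?thesis unfolding in_TW_def by (auto intro: finite_subset)
qed

lemma in_TW_tmono: "set u \<subseteq> E \<Longrightarrow> in_TW E (tmono u :: 'e list \<Rightarrow> 'a::comm_ring_1)"
proof -
  assume "set u \<subseteq> E"
  moreover have "{w. (tmono u w :: 'a) \<noteq> 0} \<subseteq> {u}" by (auto simp: tmono_def)
  ultimately show ?thesis unfolding in_TW_def by (auto intro: finite_subset simp: tmono_def)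
qed

lemma in_TW_esym:
  assumes "set es \<subseteq> E"
  shows "in_TW E (esym es j :: 'e list \<Rightarrow> 'a::comm_ring_1)"
proof -
  have sub: "{w. (esym es j w :: 'a) \<noteq> 0} \<subseteq> nths es ` Pow {..<length es}"
  proof
    fix w assume "w \<in> {w. (esym es j w :: 'a) \<noteq> 0}"
    then have "{S. S \<subseteq> {..<length es} \<and> card S = j \<and> nths es S = w} \<noteq> {}"
      unfolding esym_def by (intro notI) simp
    then obtain S where "S \<subseteq> {..<length es}" "nths es S = w" by blast
    then show "w \<in> nths es ` Pow {..<length es}" by blast
  qed
  have "set w \<subseteq> E" if "(esym es j w :: 'a) \<noteq> 0" for w
  proof -
    from sub that obtain S where "w = nths es S" by blast
    then show ?thesis using assms set_nths_subset[of es S] by (metis order_trans)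
  qed
  moreover have "finite {w. (esym es j w :: 'a) \<noteq> 0}"
    by (rule finite_subset[OF sub]) simp
  ultimately show ?thesis unfolding in_TW_def by auto
qed

lemma path_edges_sub:
  assumes "is_path G lt s cs b a"
  shows "set (path_edges cs) \<subseteq> edges G lt s"
proof
  fix e assume "e \<in> set (path_edges cs)"
  then obtain i where i: "i < min (length cs) (length (tl cs))" "e = (cs ! i, tl cs ! i)"
    unfolding path_edges_def set_zip by auto
  then have "Suc i < length cs" by auto
  then have "covers G lt s (cs ! i) (cs ! Suc i)" using assms unfolding is_path_def by auto
  moreover have "tl cs ! i = cs ! Suc i" using i by (simp add: nth_tl)
  ultimately show "e \<in> edges G lt s" using i unfolding edges_def by auto
qed

lemma AI_in_TW:
  assumes "y \<in> AI G lt s"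
  shows "in_TW (edges G lt s) (y :: ('v \<times> 'v) list \<Rightarrow> 'a::comm_ring_1)"
  using assms unfolding AI_def
proof (induction rule: two_sided_ideal.induct)
  case (gen r)
  then obtain p p' j a b where r: "r = (\<lambda>w. esym (path_edges p) j w - esym (path_edges p') j w)"
     "is_path G lt s p b a" "is_path G lt s p' b a"
    unfolding rels_def mem_Collect_eq by (elim exE conjE) blast
  show ?case unfolding r(1)
    by (intro in_TW_diff in_TW_esym path_edges_sub[OF r(2)] path_edges_sub[OF r(3)])
next
  case zero then show ?case by (rule in_TW_zero)
next
  case (add x y) then show ?case by (simp add: in_TW_add)
next
  case (lmul p x) then show ?case by (intro in_TW_tmul)
next
  case (rmul p x) then show ?case by (intro in_TW_tmul)
qed

lemma AI_scal:
  assumes "y \<in> AI G lt s"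
  shows "(\<lambda>w. a * y w) \<in> AI G lt s"
proof -
  have "tmul (\<lambda>w. if w = [] then a else 0) y \<in> AI G lt s"
    using assms unfolding AI_def by (intro two_sided_ideal.lmul in_TW_const)
  moreover have "tmul (\<lambda>w. if w = [] then a else 0) y = (\<lambda>w. a * y w)"
    by (rule ext, rule tmul_const_left)
  ultimately show ?thesis by simp
qed

lemma AI_add: "x \<in> AI G lt s \<Longrightarrow> y \<in> AI G lt s \<Longrightarrow> (\<lambda>w. x w + y w) \<in> AI G lt s"
  unfolding AI_def by (rule two_sided_ideal.add)

lemma AI_diff:
  assumes "x \<in> AI G lt s" "y \<in> AI G lt s"
  shows "(\<lambda>w. x w - y w) \<in> AI G lt s"
proof -
  have "(\<lambda>w. x w + (\<lambda>w. (-1) * y w) w) \<in> AI G lt s"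
    by (intro AI_add AI_scal assms)
  then show ?thesis by simp
qed

lemma AI_zero: "(\<lambda>w. 0) \<in> AI G lt s"
  unfolding AI_def by (rule two_sided_ideal.zero)


lemma Fil_I:
  assumes "in_TW (edges G lt s) x" "y \<in> AI G lt s" "\<And>w. x w - y w \<noteq> 0 \<Longrightarrow> int (word_rank G lt s w) \<le> m"
  shows "x \<in> Fil G lt s m"
  using assms unfolding Fil_def by blast

lemma FilE:
  assumes "x \<in> Fil G lt s m"
  obtains y where "in_TW (edges G lt s) x" "y \<in> AI G lt s" "\<And>w. x w - y w \<noteq> 0 \<Longrightarrow> int (word_rank G lt s w) \<le> m"
  using assms unfolding Fil_def by blast

lemma Fil_zero: "(\<lambda>w. 0) \<in> Fil G lt s m"
  by (rule Fil_I[OF in_TW_zero AI_zero]) simp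

lemma Fil_diff:
  assumes "x1 \<in> Fil G lt s m" "x2 \<in> Fil G lt s m"
  shows "(\<lambda>w. x1 w - x2 w) \<in> Fil G lt s m"
proof -
  obtain y1 where 1: "in_TW (edges G lt s) x1" "y1 \<in> AI G lt s" "\<And>w. x1 w - y1 w \<noteq> 0 \<Longrightarrow> int (word_rank G lt s w) \<le> m"
    using assms(1) unfolding Fil_def by auto
  obtain y2 where 2: "in_TW (edges G lt s) x2" "y2 \<in> AI G lt s" "\<And>w. x2 w - y2 w \<noteq> 0 \<Longrightarrow> int (word_rank G lt s w) \<le> m"
    using assms(2) unfolding Fil_def by auto
  show ?thesis
  proof (rule Fil_I[OF in_TW_diff[OF 1(1) 2(1)] AI_diff[OF 1(2) 2(2)]])
    fix w assume "x1 w - x2 w - (y1 w - y2 w) \<noteq> 0"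
    then have "x1 w - y1 w \<noteq> 0 \<or> x2 w - y2 w \<noteq> 0" by (auto simp: algebra_simps)
    then show "int (word_rank G lt s w) \<le> m" using 1(3) 2(3) by blast
  qed
qed

lemma Fil_add:
  assumes "x1 \<in> Fil G lt s m" "x2 \<in> Fil G lt s m"
  shows "(\<lambda>w. x1 w + x2 w) \<in> Fil G lt s m"
proof -
  have "(\<lambda>w. (\<lambda>w. 0) w - x2 w) \<in> Fil G lt s m" by (rule Fil_diff[OF Fil_zero assms(2)])
  then have "(\<lambda>w. x1 w - (\<lambda>w. 0 - x2 w) w) \<in> Fil G lt s m" by (rule Fil_diff[OF assms(1)])
  then show ?thesis by simp
qed

lemma Fil_sum:
  assumes "finite I" "\<And>i. i \<in> I \<Longrightarrow> f i \<in> Fil G lt s m"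
  shows "(\<lambda>w. \<Sum>i\<in>I. f i w) \<in> Fil G lt s m"
  using assms
proof (induction I rule: finite_induct)
  case empty then show ?case by (simp add: Fil_zero)
next
  case (insert a F)
  then have "(\<lambda>w. f a w + (\<lambda>w. \<Sum>i\<in>F. f i w) w) \<in> Fil G lt s m"
    by (intro Fil_add) auto
  then show ?case using insert by simp
qed

lemma word_rank_append: "word_rank G lt s (u @ v) = word_rank G lt s u + word_rank G lt s v"
  unfolding word_rank_def by simp

lemma Fil_mult:
  fixes p q :: "('v \<times> 'v) list \<Rightarrow> 'a::comm_ring_1"
  assumes "p \<in> Fil G lt s a" "q \<in> Fil G lt s b"
  shows "tmul p q \<in> Fil G lt s (a + b)"
proof -
  obtain y1 where 1: "in_TW (edges G lt s) p" "y1 \<in> AI G lt s" "\<And>w. p w - y1 w \<noteq> 0 \<Longrightarrow> int (word_rank G lt s w) \<le> a"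
    using assms(1) unfolding Fil_def by auto
  obtain y2 where 2: "in_TW (edges G lt s) q" "y2 \<in> AI G lt s" "\<And>w. q w - y2 w \<noteq> 0 \<Longrightarrow> int (word_rank G lt s w) \<le> b"
    using assms(2) unfolding Fil_def by auto
  define u1 where "u1 = (\<lambda>w. p w - y1 w)"
  define u2 where "u2 = (\<lambda>w. q w - y2 w)"
  have u1: "in_TW (edges G lt s) u1" unfolding u1_def by (intro in_TW_diff 1(1) AI_in_TW 1(2))
  define Y where "Y = (\<lambda>w. tmul y1 q w + tmul u1 y2 w)"
  have "tmul y1 q \<in> AI G lt s" using 1(2) 2(1) unfolding AI_def by (rule two_sided_ideal.rmul[rotated])
  moreover have "tmul u1 y2 \<in> AI G lt s" using 2(2) u1 unfolding AI_def by (rule two_sided_ideal.lmul[rotated])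
  ultimately have Y: "Y \<in> AI G lt s" unfolding Y_def by (rule AI_add)
  show ?thesis
  proof (rule Fil_I[OF in_TW_tmul[OF 1(1) 2(1)] Y])
    fix w assume "tmul p q w - Y w \<noteq> 0"
    moreover have "tmul p q w - Y w = tmul u1 u2 w"
      unfolding Y_def u1_def u2_def tmul_diff_left tmul_diff_right by (simp add: algebra_simps)
    ultimately have "tmul u1 u2 w \<noteq> 0" by simp
    then obtain i where "u1 (take i w) \<noteq> 0" "u2 (drop i w) \<noteq> 0" by (rule tmul_nonzero)
    then have "int (word_rank G lt s (take i w)) \<le> a" "int (word_rank G lt s (drop i w)) \<le> b"
      using 1(3) 2(3) unfolding u1_def u2_def by auto
    moreover have "word_rank G lt s w = word_rank G lt s (take i w) + word_rank G lt s (drop i w)"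
      by (metis append_take_drop_id word_rank_append)
    ultimately show "int (word_rank G lt s w) \<le> a + b" by simp
  qed
qed

lemma Fil_tmono:
  assumes "set u \<subseteq> edges G lt s" "int (word_rank G lt s u) \<le> m"
  shows "(tmono u :: ('v \<times> 'v) list \<Rightarrow> 'a::comm_ring_1) \<in> Fil G lt s m"
  by (rule Fil_I[OF in_TW_tmono[OF assms(1)] AI_zero]) (use assms in \<open>auto simp: tmono_def split: if_splits\<close>)


lemma finite_has_minimal:
  assumes "finite A" "A \<noteq> {}" "\<forall>x\<in>A. \<not> r x x"
    "\<forall>x\<in>A. \<forall>y\<in>A. \<forall>z\<in>A. r x y \<longrightarrow> r y z \<longrightarrow> r x z"
  shows "\<exists>m\<in>A. \<forall>z\<in>A. \<not> r z m"
proof -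
  obtain a where a: "a \<in> A" using assms(2) by blast
  obtain m where m: "m \<in> A" "\<forall>y. y \<in> A \<longrightarrow> card {z\<in>A. r z m} \<le> card {z\<in>A. r z y}"
    using ex_has_least_nat[of "\<lambda>y. y \<in> A" a "\<lambda>y. card {z\<in>A. r z y}"] a by blast
  have "\<forall>z\<in>A. \<not> r z m"
  proof (intro ballI notI)
    fix z assume z: "z \<in> A" "r z m"
    have sub: "{y\<in>A. r y z} \<subseteq> {y\<in>A. r y m}"
    proof
      fix y assume "y \<in> {y\<in>A. r y z}"
      then have y: "y \<in> A" "r y z" by simp_all
      have "r y z \<longrightarrow> r z m \<longrightarrow> r y m" using bspec[OF bspec[OF bspec[OF assms(4) y(1)] z(1)] m(1)] .
      then show "y \<in> {y\<in>A. r y m}" using y z by simp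
    qed
    have "z \<notin> {y\<in>A. r y z}" using bspec[OF assms(3) z(1)] by simp
    moreover have "z \<in> {y\<in>A. r y m}" using z by simp
    ultimately have "{y\<in>A. r y z} \<subset> {y\<in>A. r y m}" using sub by blast
    then have "card {y\<in>A. r y z} < card {y\<in>A. r y m}"
      using assms(1) by (intro psubset_card_mono) simp_all
    then show False using m(2) z(1) by (meson not_le)
  qed
  then show ?thesis using m(1) by blast
qed

lemma exists_maxchain:
  assumes "finite S" "is_chain_in lt S D0"
  shows "\<exists>D. is_maxchain_in lt S D \<and> D0 \<subseteq> D"
proof -
  define F where "F = {D. is_chain_in lt S D \<and> D0 \<subseteq> D}"
  have Fsub: "F \<subseteq> Pow S" unfolding F_def is_chain_in_def by auto
  then have finF: "finite F" using assms(1) by (meson finite_Pow_iff finite_subset)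
  have "D0 \<in> F" using assms(2) unfolding F_def by auto
  define n where "n = Max (card ` F)"
  have "n \<in> card ` F" unfolding n_def using finF \<open>D0 \<in> F\<close> by (intro Max_in) auto
  then obtain D where D: "D \<in> F" "card D = n" by auto
  have le: "card E \<le> n" if "E \<in> F" for E
    unfolding n_def using finF that by (intro Max_ge) auto
  have "is_maxchain_in lt S D"
    unfolding is_maxchain_in_def
  proof (intro conjI allI impI)
    show "is_chain_in lt S D" using D(1) unfolding F_def by auto
  next
    fix E assume E: "is_chain_in lt S E \<and> D \<subseteq> E"
    then have "E \<in> F" using D(1) unfolding F_def by auto
    then have "card E \<le> card D" using le D(2) by auto
    moreover have "finite E" using E assms(1) unfolding is_chain_in_def by (meson finite_subset)
    moreover have "card D \<le> card E" using E \<open>finite E\<close> by (intro card_mono) auto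
    ultimately have "card D = card E" by simp
    then show "E = D" using card_subset_eq[OF \<open>finite E\<close>, of D] E by auto
  qed
  then show ?thesis using D(1) unfolding F_def by auto
qed

context
  fixes G :: "'v set" and lt :: "'v \<Rightarrow> 'v \<Rightarrow> bool" and s :: 'v
  assumes P: "finite_ranked_poset G lt s"
begin

lemma finG: "finite G" using P unfolding finite_ranked_poset_def by auto
lemma irr: "x \<in> G \<Longrightarrow> \<not> lt x x" using P unfolding finite_ranked_poset_def by auto
lemma ptrans: "x \<in> G \<Longrightarrow> y \<in> G \<Longrightarrow> z \<in> G \<Longrightarrow> lt x y \<Longrightarrow> lt y z \<Longrightarrow> lt x z"
  using P unfolding finite_ranked_poset_def by blast
lemma sG: "s \<in> G" using P unfolding finite_ranked_poset_def by auto
lemma smin: "y \<in> G \<Longrightarrow> \<not> lt y s" using P unfolding finite_ranked_poset_def by auto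
lemma uniqmin: "m \<in> G \<Longrightarrow> (\<forall>y\<in>G. \<not> lt y m) \<Longrightarrow> m = s" using P unfolding finite_ranked_poset_def by auto
lemma eqcard: "x \<in> G \<Longrightarrow> is_maxchain_in lt (interval_below G lt s x) C1 \<Longrightarrow>
    is_maxchain_in lt (interval_below G lt s x) C2 \<Longrightarrow> card C1 = card C2"
  using P unfolding finite_ranked_poset_def by blast

lemma above_s: assumes "x \<in> G" shows "x = s \<or> lt s x"
proof -
  define M where "M = {z\<in>G. z = x \<or> lt z x}"
  have "finite M" using finG unfolding M_def by auto
  moreover have "M \<noteq> {}" using assms unfolding M_def by auto
  moreover have "\<forall>z\<in>M. \<not> lt z z" unfolding M_def using irr by auto
  moreover have "\<forall>a\<in>M. \<forall>b\<in>M. \<forall>c\<in>M. lt a b \<longrightarrow> lt b c \<longrightarrow> lt a c"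
  proof (intro ballI impI)
    fix a b c assume "a \<in> M" "b \<in> M" "c \<in> M" "lt a b" "lt b c"
    then show "lt a c" using ptrans[of a b c] unfolding M_def by simp
  qed
  ultimately obtain m where m: "m \<in> M" "\<forall>z\<in>M. \<not> lt z m" using finite_has_minimal[of M lt] by blast
  have "\<forall>y\<in>G. \<not> lt y m"
  proof (intro ballI notI)
    fix y assume y: "y \<in> G" "lt y m"
    have "m \<in> G" "m = x \<or> lt m x" using m(1) unfolding M_def by auto
    then have "y = x \<or> lt y x" using y ptrans[of y m x] assms by blast
    then have "y \<in> M" using y unfolding M_def by auto
    then show False using m(2) y(2) by auto
  qed
  then have "m = s" using m(1) unfolding M_def by (intro uniqmin) auto
  then show ?thesis using m(1) unfolding M_def by auto
qed

lemma interval_eq: "x \<in> G \<Longrightarrow> interval_below G lt s x = {z\<in>G. z = x \<or> lt z x}"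
  unfolding interval_below_def using above_s by blast

lemma finite_interval: "finite (interval_below G lt s x)"
  unfolding interval_below_def using finG by auto

lemma rk_card:
  assumes x: "x \<in> G" and C: "is_maxchain_in lt (interval_below G lt s x) C"
  shows "card C = Suc (rk G lt s x)"
proof -
  have "is_chain_in lt (interval_below G lt s x) {x}"
    unfolding is_chain_in_def interval_eq[OF x] using x by simp
  then obtain C0 where C0: "is_maxchain_in lt (interval_below G lt s x) C0" "{x} \<subseteq> C0"
    using exists_maxchain finite_interval by blast
  have "finite C0" using C0(1) finite_interval unfolding is_maxchain_in_def is_chain_in_def
    by (meson finite_subset)
  then have "card C0 \<noteq> 0" using C0(2) by auto
  then have "\<exists>n C. is_maxchain_in lt (interval_below G lt s x) C \<and> card C = Suc n"
    using C0(1) by (metis not0_implies_Suc)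
  then have "\<exists>C. is_maxchain_in lt (interval_below G lt s x) C \<and> card C = Suc (rk G lt s x)"
    unfolding rk_def by (rule someI_ex)
  then obtain C' where "is_maxchain_in lt (interval_below G lt s x) C'" "card C' = Suc (rk G lt s x)" by blast
  then show ?thesis using eqcard[OF x C] by auto
qed

lemma rk_s: "rk G lt s s = 0"
proof -
  have I: "interval_below G lt s s = {s}" unfolding interval_below_def using sG smin by auto
  have "is_maxchain_in lt (interval_below G lt s s) {s}"
    unfolding I is_maxchain_in_def is_chain_in_def by auto
  from rk_card[OF sG this] show ?thesis by simp
qed

lemma extend_chain:
  assumes a: "a \<in> G" and b: "b \<in> G" and ab: "lt a b"
    and C: "is_maxchain_in lt (interval_below G lt s a) C"
  shows "is_chain_in lt (interval_below G lt s b) (insert b C)" "b \<notin> C" "\<forall>c\<in>C. lt c b \<and> c \<in> G"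
    "finite C"
proof -
  have Csub: "C \<subseteq> interval_below G lt s a" using C unfolding is_maxchain_in_def is_chain_in_def by auto
  show Cb: "\<forall>c\<in>C. lt c b \<and> c \<in> G"
  proof
    fix c assume "c \<in> C"
    then have c: "c \<in> G" "c = a \<or> lt c a" using Csub interval_eq[OF a] by auto
    then show "lt c b \<and> c \<in> G" using ptrans[OF c(1) a b _ ab] ab by auto
  qed
  have "insert b C \<subseteq> interval_below G lt s b" using Cb b interval_eq[OF b] by auto
  moreover have "\<forall>x\<in>C. \<forall>y\<in>C. x = y \<or> lt x y \<or> lt y x"
    using C unfolding is_maxchain_in_def is_chain_in_def by blast
  then have "\<forall>x\<in>insert b C. \<forall>y\<in>insert b C. x = y \<or> lt x y \<or> lt y x"
    using Cb by blast
  ultimately show "is_chain_in lt (interval_below G lt s b) (insert b C)"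
    unfolding is_chain_in_def by blast
  show "b \<notin> C" using Cb irr b by auto
  show "finite C" using Csub finite_interval by (rule finite_subset)
qed

lemma rk_mono:
  assumes a: "a \<in> G" and b: "b \<in> G" and ab: "lt a b"
  shows "rk G lt s a < rk G lt s b"
proof -
  have "is_chain_in lt (interval_below G lt s a) {}" unfolding is_chain_in_def by simp
  then obtain C where C: "is_maxchain_in lt (interval_below G lt s a) C"
    using exists_maxchain[OF finite_interval] by blast
  note E = extend_chain[OF a b ab C]
  obtain D where D: "is_maxchain_in lt (interval_below G lt s b) D" "insert b C \<subseteq> D"
    using exists_maxchain[OF finite_interval E(1)] by blast
  have "D \<subseteq> interval_below G lt s b" using D(1) unfolding is_maxchain_in_def is_chain_in_def by simp
  then have finD: "finite D" using finite_interval by (rule finite_subset)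
  have "card (insert b C) \<le> card D" using D(2) finD by (rule card_mono[rotated])
  then have "Suc (card C) \<le> card D" using E(2) E(4) by simp
  moreover have "card C = Suc (rk G lt s a)" by (rule rk_card[OF a C])
  moreover have "card D = Suc (rk G lt s b)" by (rule rk_card[OF b D(1)])
  ultimately show ?thesis by linarith
qed

lemma covers_rk: assumes "covers G lt s x y" shows "rk G lt s x = Suc (rk G lt s y)"
proof -
  have xy: "x \<in> G" "y \<in> G" "lt y x" "rk G lt s x - rk G lt s y = 1"
    using assms unfolding covers_def rdist_def by auto
  have "rk G lt s y < rk G lt s x" by (rule rk_mono[OF xy(2) xy(1) xy(3)])
  then show ?thesis using xy(4) by linarith
qed

lemma rk0: assumes "x \<in> G" "rk G lt s x = 0" shows "x = s"
proof (rule ccontr)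
  assume "x \<noteq> s"
  then have "lt s x" using above_s[OF assms(1)] by auto
  then have "rk G lt s s < rk G lt s x" by (rule rk_mono[OF sG assms(1)])
  then show False using assms(2) by simp
qed

lemma cover_step:
  assumes a: "a \<in> G" and b: "b \<in> G" and ab: "lt a b"
  shows "\<exists>c. covers G lt s b c \<and> (c = a \<or> lt a c)"
proof -
  have "is_chain_in lt (interval_below G lt s a) {a}"
    unfolding is_chain_in_def interval_eq[OF a] using a by simp
  then obtain C where C: "is_maxchain_in lt (interval_below G lt s a) C" "{a} \<subseteq> C"
    using exists_maxchain[OF finite_interval] by blast
  note E = extend_chain[OF a b ab C(1)]
  obtain D where D: "is_maxchain_in lt (interval_below G lt s b) D" "insert b C \<subseteq> D"
    using exists_maxchain[OF finite_interval E(1)] by blast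
  have DI: "D \<subseteq> interval_below G lt s b" using D(1) unfolding is_maxchain_in_def is_chain_in_def by simp
  then have finD: "finite D" using finite_interval by (rule finite_subset)
  have Dsub: "D \<subseteq> {z\<in>G. z = b \<or> lt z b}" using DI interval_eq[OF b] by simp
  have Dch: "\<forall>x\<in>D. \<forall>y\<in>D. x = y \<or> lt x y \<or> lt y x"
    using D(1) unfolding is_maxchain_in_def is_chain_in_def by blast
  define D' where "D' = D - {b}"
  have aD': "a \<in> D'" using C(2) D(2) E(2) unfolding D'_def by auto
  have D'G: "D' \<subseteq> G" using Dsub unfolding D'_def by auto
  have "\<exists>c\<in>D'. \<forall>z\<in>D'. \<not> (\<lambda>x y. lt y x) z c"
  proof (rule finite_has_minimal)
    show "finite D'" unfolding D'_def using finD by simp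
    show "D' \<noteq> {}" using aD' by auto
    show "\<forall>x\<in>D'. \<not> lt x x" using D'G irr by auto
    show "\<forall>x\<in>D'. \<forall>y\<in>D'. \<forall>z\<in>D'. lt y x \<longrightarrow> lt z y \<longrightarrow> lt z x"
    proof (intro ballI impI)
      fix x y z assume "x \<in> D'" "y \<in> D'" "z \<in> D'" "lt y x" "lt z y"
      then show "lt z x" using ptrans[of z y x] D'G by auto
    qed
  qed
  then obtain c where c: "c \<in> D'" "\<forall>z\<in>D'. \<not> lt c z" by auto
  have cG: "c \<in> G" "lt c b" using c(1) Dsub unfolding D'_def by auto
  have D'c: "\<forall>z\<in>D'. z = c \<or> lt z c" using c Dch unfolding D'_def by blast
  have max: "is_maxchain_in lt (interval_below G lt s c) D'"
    unfolding is_maxchain_in_def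
  proof (intro conjI allI impI)
    have "D' \<subseteq> interval_below G lt s c" unfolding interval_eq[OF cG(1)] using D'c D'G by auto
    moreover have "\<forall>x\<in>D'. \<forall>y\<in>D'. x = y \<or> lt x y \<or> lt y x" using Dch unfolding D'_def by blast
    ultimately show "is_chain_in lt (interval_below G lt s c) D'"
      unfolding is_chain_in_def by blast
  next
    fix E assume E: "is_chain_in lt (interval_below G lt s c) E \<and> D' \<subseteq> E"
    then have Esub: "E \<subseteq> {z\<in>G. z = c \<or> lt z c}" unfolding is_chain_in_def interval_eq[OF cG(1)] by auto
    have Eb: "\<forall>e\<in>E. lt e b \<and> e \<in> G"
    proof
      fix e assume "e \<in> E"
      then have e: "e \<in> G" "e = c \<or> lt e c" using Esub by auto
      then show "lt e b \<and> e \<in> G" using ptrans[OF e(1) cG(1) b _ cG(2)] cG(2) by auto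
    qed
    have "insert b E \<subseteq> interval_below G lt s b" using Eb b interval_eq[OF b] by auto
    moreover have "\<forall>x\<in>E. \<forall>y\<in>E. x = y \<or> lt x y \<or> lt y x"
      using E unfolding is_chain_in_def by blast
    then have "\<forall>x\<in>insert b E. \<forall>y\<in>insert b E. x = y \<or> lt x y \<or> lt y x"
      using Eb by blast
    ultimately have "is_chain_in lt (interval_below G lt s b) (insert b E)"
      unfolding is_chain_in_def by blast
    moreover have "D \<subseteq> insert b E" using E unfolding D'_def by auto
    ultimately have "insert b E = D" using D(1) unfolding is_maxchain_in_def by blast
    moreover have "b \<notin> E" using Eb irr b by auto
    ultimately show "E = D'" unfolding D'_def by auto
  qed
  have "b \<in> D" using D(2) by auto
  then have "card D' = card D - 1" unfolding D'_def using finD by simp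
  moreover have "card D' = Suc (rk G lt s c)" by (rule rk_card[OF cG(1) max])
  moreover have "card D = Suc (rk G lt s b)" by (rule rk_card[OF b D(1)])
  ultimately have "Suc (rk G lt s c) = rk G lt s b" by linarith
  then have "covers G lt s b c" unfolding covers_def rdist_def using b cG by auto
  moreover have "c = a \<or> lt a c" using D'c aD' by auto
  ultimately show ?thesis by auto
qed

end


lemma pe_Cons2: "ys \<noteq> [] \<Longrightarrow> path_edges (x # ys) = (x, hd ys) # path_edges ys"
  by (cases ys) (simp_all add: path_edges_def)

lemma pe_single: "path_edges [x] = []"
  by (simp add: path_edges_def)

lemma length_pe: "length (path_edges cs) = length cs - 1"
  by (simp add: path_edges_def)

lemma pe_nth: "i < length cs - 1 \<Longrightarrow> path_edges cs ! i = (cs ! i, cs ! Suc i)"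
  by (simp add: path_edges_def nth_tl)

lemma pe_append: "path_edges (xs @ [c]) @ path_edges (c # t) = path_edges (xs @ c # t)"
proof (induction xs)
  case Nil then show ?case by (simp add: pe_single)
next
  case (Cons x xs)
  have "path_edges ((x # xs) @ [c]) = (x, hd (xs @ [c])) # path_edges (xs @ [c])"
    by (simp add: pe_Cons2)
  moreover have "path_edges ((x # xs) @ c # t) = (x, hd (xs @ c # t)) # path_edges (xs @ c # t)"
    by (simp add: pe_Cons2)
  moreover have "hd (xs @ [c]) = hd (xs @ c # t)" by (cases xs) simp_all
  ultimately show ?case using Cons by simp
qed

lemma set_pe: "set (path_edges cs) = {(cs ! i, cs ! Suc i) | i. Suc i < length cs}"
proof -
  have "set (path_edges cs) = {path_edges cs ! i | i. i < length (path_edges cs)}"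
    by (simp add: set_conv_nth)
  also have "\<dots> = {(cs ! i, cs ! Suc i) | i. Suc i < length cs}"
    unfolding length_pe
  proof (intro set_eqI iffI)
    fix e assume "e \<in> {path_edges cs ! i | i. i < length cs - 1}"
    then obtain i where "e = path_edges cs ! i" "i < length cs - 1" by blast
    then show "e \<in> {(cs ! i, cs ! Suc i) | i. Suc i < length cs}" using pe_nth by fastforce
  next
    fix e assume "e \<in> {(cs ! i, cs ! Suc i) | i. Suc i < length cs}"
    then obtain i where "e = (cs ! i, cs ! Suc i)" "Suc i < length cs" by blast
    then have "e = path_edges cs ! i" "i < length cs - 1" using pe_nth[of i cs] by auto
    then show "e \<in> {path_edges cs ! i | i. i < length cs - 1}" by blast
  qed
  finally show ?thesis .
qed

lemma is_path_iff: "is_path G lt s cs b a \<longleftrightarrow> cs \<noteq> [] \<and> hd cs = b \<and> last cs = a \<and>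
   (\<forall>e\<in>set (path_edges cs). covers G lt s (fst e) (snd e))"
  unfolding is_path_def set_pe by auto

lemma is_path_append:
  assumes p1: "is_path G lt s cs1 b c" and p2: "is_path G lt s cs2 c a"
  shows "is_path G lt s (cs1 @ tl cs2) b a" "path_edges (cs1 @ tl cs2) = path_edges cs1 @ path_edges cs2"
proof -
  have ne1: "cs1 \<noteq> []" "last cs1 = c" "hd cs1 = b" using p1 unfolding is_path_def by auto
  have ne2: "cs2 \<noteq> []" "hd cs2 = c" "last cs2 = a" using p2 unfolding is_path_def by auto
  have e1: "cs1 = butlast cs1 @ [c]" using ne1 by (metis append_butlast_last_id)
  have e2: "cs2 = c # tl cs2" using ne2 by (metis list.collapse)
  have eq: "cs1 @ tl cs2 = butlast cs1 @ c # tl cs2" using e1 by (metis append.assoc append_Cons append_Nil)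
  show pe: "path_edges (cs1 @ tl cs2) = path_edges cs1 @ path_edges cs2"
    using pe_append[of "butlast cs1" c "tl cs2"] e1 e2 eq by metis
  have "hd (cs1 @ tl cs2) = b" using ne1 by simp
  moreover have "last (cs1 @ tl cs2) = a"
  proof (cases "tl cs2 = []")
    case True
    then have "cs2 = [c]" using e2 by simp
    then show ?thesis using True ne1 ne2 by simp
  next
    case False
    then have "last (tl cs2) = a" using ne2 e2 by (metis last_ConsR)
    then show ?thesis using False by simp
  qed
  moreover have "\<forall>e\<in>set (path_edges (cs1 @ tl cs2)). covers G lt s (fst e) (snd e)"
    unfolding pe using p1 p2 unfolding is_path_iff by auto
  ultimately show "is_path G lt s (cs1 @ tl cs2) b a" unfolding is_path_iff using ne1 by simp
qed

context
  fixes G :: "'v set" and lt :: "'v \<Rightarrow> 'v \<Rightarrow> bool" and s :: 'v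
  assumes P: "finite_ranked_poset G lt s"
begin

lemma is_path_rk:
  assumes p: "is_path G lt s cs b a" and b: "b \<in> G"
  shows "i < length cs \<Longrightarrow> cs ! i \<in> G \<and> rk G lt s (cs ! i) + i = rk G lt s b"
proof (induction i)
  case 0
  have "cs ! 0 = b" using p unfolding is_path_def by (metis hd_conv_nth)
  then show ?case using b by simp
next
  case (Suc i)
  then have IH: "cs ! i \<in> G" "rk G lt s (cs ! i) + i = rk G lt s b" by auto
  have cv: "covers G lt s (cs ! i) (cs ! Suc i)" using p Suc.prems unfolding is_path_def by auto
  then have "cs ! Suc i \<in> G" unfolding covers_def by simp
  moreover have "rk G lt s (cs ! i) = Suc (rk G lt s (cs ! Suc i))" by (rule covers_rk[OF P cv])
  ultimately show ?case using IH by simp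
qed

lemma is_path_len:
  assumes p: "is_path G lt s cs b a" and b: "b \<in> G"
  shows "rk G lt s a + (length cs - 1) = rk G lt s b" "a \<in> G"
proof -
  have ne: "cs \<noteq> []" "last cs = a" using p unfolding is_path_def by auto
  then have "cs ! (length cs - 1) = a" by (simp add: last_conv_nth)
  moreover have "length cs - 1 < length cs" using ne by simp
  ultimately show "rk G lt s a + (length cs - 1) = rk G lt s b" "a \<in> G"
    using is_path_rk[OF p b, of "length cs - 1"] by auto
qed

lemma pe_rk:
  assumes p: "is_path G lt s cs b a" and b: "b \<in> G" and i: "i < length (path_edges cs)"
  shows "rk G lt s (fst (path_edges cs ! i)) + i = rk G lt s b"
proof -
  have i1: "i < length cs - 1" using i by (simp add: length_pe)
  then have "i < length cs" by simp
  then show ?thesis using pe_nth[OF i1] is_path_rk[OF p b, of i] by simp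
qed

lemma cover_path:
  assumes a: "a \<in> G" and b: "b \<in> G" and ab: "lt a b"
  shows "\<exists>cs. is_path G lt s cs b a \<and> length cs = Suc (rk G lt s b - rk G lt s a)"
  using b ab
proof (induction "rk G lt s b - rk G lt s a" arbitrary: b rule: less_induct)
  case less
  obtain c where c: "covers G lt s b c" "c = a \<or> lt a c" using cover_step[OF P a less.prems(1) less.prems(2)] by blast
  have cG: "c \<in> G" using c(1) unfolding covers_def by simp
  have rkbc: "rk G lt s b = Suc (rk G lt s c)" by (rule covers_rk[OF P c(1)])
  show ?case
  proof (cases "c = a")
    case True
    have "is_path G lt s [b, a] b a" unfolding is_path_def using c(1) True by (auto simp: less_Suc_eq)
    then show ?thesis using rkbc True by (intro exI[of _ "[b, a]"]) simp
  next
    case False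
    then have ac: "lt a c" using c(2) by simp
    have "rk G lt s a < rk G lt s c" by (rule rk_mono[OF P a cG ac])
    then have "rk G lt s c - rk G lt s a < rk G lt s b - rk G lt s a" using rkbc by simp
    then obtain cs where cs: "is_path G lt s cs c a" "length cs = Suc (rk G lt s c - rk G lt s a)"
      using less.hyps[OF _ cG ac] by blast
    have "is_path G lt s [b, c] b c" unfolding is_path_def using c(1) by (auto simp: less_Suc_eq)
    then have "is_path G lt s ([b, c] @ tl cs) b a" by (rule is_path_append(1)[OF _ cs(1)])
    moreover have "length ([b, c] @ tl cs) = Suc (rk G lt s b - rk G lt s a)"
      using cs(2) rkbc \<open>rk G lt s a < rk G lt s c\<close> by simp
    ultimately show ?thesis by blast
  qed
qed

lemma dist_iter:
  assumes D: "\<forall>y\<in>G - {s}. covers G lt s y (dist y)" and x: "x \<in> G"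
  shows "i \<le> rk G lt s x \<Longrightarrow> (dist ^^ i) x \<in> G \<and> rk G lt s ((dist ^^ i) x) + i = rk G lt s x"
proof (induction i)
  case 0 then show ?case using x by simp
next
  case (Suc i)
  then have IH: "(dist ^^ i) x \<in> G" "rk G lt s ((dist ^^ i) x) + i = rk G lt s x" by auto
  have "(dist ^^ i) x \<noteq> s" using IH Suc.prems rk_s[OF P] by auto
  then have cv: "covers G lt s ((dist ^^ i) x) (dist ((dist ^^ i) x))" using D IH(1) by auto
  then have "dist ((dist ^^ i) x) \<in> G" unfolding covers_def by simp
  moreover have "rk G lt s ((dist ^^ i) x) = Suc (rk G lt s (dist ((dist ^^ i) x)))" by (rule covers_rk[OF P cv])
  ultimately show ?case using IH by simp
qed

definition dvs :: "('v \<Rightarrow> 'v) \<Rightarrow> 'v \<Rightarrow> nat \<Rightarrow> 'v list" where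
  "dvs dist x N = map (\<lambda>i. (dist ^^ i) x) [0..<Suc N]"

lemma pe_dvs: "path_edges (dvs dist x N) = dpath_edges dist x N"
  by (rule nth_equalityI) (simp_all add: length_pe dvs_def dpath_edges_def pe_nth del: upt_Suc)

lemma dvs_path:
  assumes D: "\<forall>y\<in>G - {s}. covers G lt s y (dist y)" and x: "x \<in> G" and N: "N \<le> rk G lt s x"
  shows "is_path G lt s (dvs dist x N) x ((dist ^^ N) x)"
  unfolding is_path_def
proof (intro conjI allI impI)
  show "dvs dist x N \<noteq> []" unfolding dvs_def by simp
  show "hd (dvs dist x N) = x" unfolding dvs_def by (simp add: hd_map del: upt_Suc)
  show "last (dvs dist x N) = (dist ^^ N) x" unfolding dvs_def by (simp add: last_map del: upt_Suc)
  fix i assume i: "Suc i < length (dvs dist x N)"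
  then have iN: "i < N" unfolding dvs_def by simp
  have "i \<le> rk G lt s x" using iN N by simp
  from dist_iter[OF D x this] have IH: "(dist ^^ i) x \<in> G" "rk G lt s ((dist ^^ i) x) + i = rk G lt s x" by auto
  have "(dist ^^ i) x \<noteq> s" using IH iN N rk_s[OF P] by auto
  then have "covers G lt s ((dist ^^ i) x) (dist ((dist ^^ i) x))" using D IH(1) by auto
  moreover have "dvs dist x N ! i = (dist ^^ i) x" "dvs dist x N ! Suc i = (dist ^^ Suc i) x"
    using iN unfolding dvs_def by (simp_all del: upt_Suc)
  ultimately show "covers G lt s (dvs dist x N ! i) (dvs dist x N ! Suc i)" by simp
qed

lemma dist_end:
  assumes D: "\<forall>y\<in>G - {s}. covers G lt s y (dist y)" and x: "x \<in> G"
  shows "(dist ^^ rk G lt s x) x = s"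
  using dist_iter[OF D x, of "rk G lt s x"] rk0[OF P] by simp

end


lemma sum_list_nths:
  "sum_list (map f (nths xs S)) = (\<Sum>i<length xs. if i \<in> S then f (xs ! i) else (0::'b::comm_monoid_add))"
proof (induction xs arbitrary: S)
  case Nil then show ?case by simp
next
  case (Cons x xs)
  have "sum_list (map f (nths (x # xs) S)) = (if 0 \<in> S then f x else 0) + sum_list (map f (nths xs {j. Suc j \<in> S}))"
    by (simp add: nths_Cons)
  also have "\<dots> = (if 0 \<in> S then f x else 0) + (\<Sum>i<length xs. if Suc i \<in> S then f (xs ! i) else 0)"
    using Cons.IH[of "{j. Suc j \<in> S}"] by simp
  also have "\<dots> = (\<Sum>i<Suc (length xs). if i \<in> S then f ((x # xs) ! i) else 0)"
    unfolding sum.lessThan_Suc_shift by (simp cong: if_cong)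
  also have "\<dots> = (\<Sum>i<length (x # xs). if i \<in> S then f ((x # xs) ! i) else 0)"
    by simp
  finally show ?case .
qed

lemma tri_sum:
  fixes S :: "nat set"
  assumes "finite S"
  shows "(\<Sum>i<card S. i) \<le> \<Sum>S \<and> (\<Sum>S = (\<Sum>i<card S. i) \<longrightarrow> S = {..<card S})"
  using assms
proof (induction "card S" arbitrary: S)
  case 0 then show ?case by simp
next
  case (Suc n)
  then have ne: "S \<noteq> {}" by auto
  define M where "M = Max S"
  have MS: "M \<in> S" unfolding M_def using Suc.prems ne by simp
  define S' where "S' = S - {M}"
  have fS': "finite S'" unfolding S'_def using Suc.prems by simp
  have cS': "card S' = n" unfolding S'_def using Suc.hyps(2) MS Suc.prems by simp
  have IH: "(\<Sum>i<n. i) \<le> \<Sum>S' \<and> (\<Sum>S' = (\<Sum>i<n. i) \<longrightarrow> S' = {..<n})"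
    using Suc.hyps(1)[OF cS'[symmetric] fS'] cS' by simp
  have sumS: "\<Sum>S = M + \<Sum>S'" unfolding S'_def using MS Suc.prems by (simp add: sum.remove)
  have "S \<subseteq> {..M}" unfolding M_def using Suc.prems by auto
  then have "card S \<le> card {..M}" by (intro card_mono) simp_all
  then have nM: "n \<le> M" using Suc.hyps(2) by simp
  have tri: "(\<Sum>i<card S. i) = (\<Sum>i<n. i) + n" using Suc.hyps(2)[symmetric] by simp
  have "(\<Sum>i<card S. i) \<le> \<Sum>S" using tri sumS IH nM by simp
  moreover have "S = {..<card S}" if eq: "\<Sum>S = (\<Sum>i<card S. i)"
  proof -
    have "\<Sum>S' = (\<Sum>i<n. i)" using eq tri sumS IH nM by linarith
    moreover have "M = n" using eq tri sumS IH nM by linarith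
    ultimately have "S' = {..<n}" using IH by simp
    then have "S = insert n {..<n}" unfolding S'_def using MS \<open>M = n\<close> by auto
    then show ?thesis using Suc.hyps(2)[symmetric] by (simp add: lessThan_Suc)
  qed
  ultimately show ?case by blast
qed

lemma sum_rev:
  fixes S :: "nat set"
  assumes "finite S" "\<forall>i\<in>S. i \<le> R"
  shows "(\<Sum>i\<in>S. R - i) + \<Sum>S = card S * R"
proof -
  have "(\<Sum>i\<in>S. R - i) + \<Sum>S = (\<Sum>i\<in>S. (R - i) + i)" by (simp add: sum.distrib)
  also have "\<dots> = (\<Sum>i\<in>S. R)" using assms(2) by (intro sum.cong) auto
  finally show ?thesis by simp
qed

definition Dg :: "nat \<Rightarrow> nat \<Rightarrow> nat" where "Dg R j = (\<Sum>i<j. R - i)"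

lemma Dg_formula: assumes "j \<le> R" shows "j * R - j * (j - 1) div 2 = Dg R j"
proof -
  have "(\<Sum>i\<in>{..<j}. R - i) + \<Sum>{..<j} = card {..<j} * R"
    using assms by (intro sum_rev) auto
  then have e1: "Dg R j + \<Sum>{..<j} = j * R" unfolding Dg_def by simp
  have "\<Sum>{..<j} = j * (j - 1) div 2"
  proof (cases j)
    case 0 then show ?thesis by simp
  next
    case (Suc n)
    have "{..<j} = {0..n}" using Suc by auto
    then show ?thesis using gauss_sum_nat[of n] Suc by (simp add: mult.commute)
  qed
  then show ?thesis using e1 by simp
qed

lemma Dg_add: "Dg R k + Dg (R - k) k' = Dg R (k + k')"
  by (induction k') (simp_all add: Dg_def)

lemma take_dpath: "j \<le> N \<Longrightarrow> take j (dpath_edges dist x N) = dpath_edges dist x j"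
  unfolding dpath_edges_def by (simp add: take_map min_def)

lemma minus_one_sq: "((-1::'a::comm_ring_1) ^ j) * (-1) ^ j = 1"
  by (simp add: power_add[symmetric])

context
  fixes G :: "'v set" and lt :: "'v \<Rightarrow> 'v \<Rightarrow> bool" and s :: 'v
  assumes P: "finite_ranked_poset G lt s"
begin

lemma wr_nths:
  assumes p: "is_path G lt s cs b a" and b: "b \<in> G" and S: "S \<subseteq> {..<length (path_edges cs)}"
  shows "word_rank G lt s (nths (path_edges cs) S) = (\<Sum>i\<in>S. rk G lt s b - i)"
proof -
  let ?es = "path_edges cs"
  have "word_rank G lt s (nths ?es S) = (\<Sum>i<length ?es. if i \<in> S then rk G lt s (fst (?es ! i)) else 0)"
    unfolding word_rank_def by (rule sum_list_nths)
  also have "\<dots> = (\<Sum>i<length ?es. if i \<in> S then rk G lt s b - i else 0)"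
  proof (intro sum.cong refl)
    fix i assume "i \<in> {..<length ?es}"
    then have "rk G lt s (fst (?es ! i)) + i = rk G lt s b" using pe_rk[OF P p b] by simp
    then have "rk G lt s (fst (?es ! i)) = rk G lt s b - i" by linarith
    then show "(if i \<in> S then rk G lt s (fst (?es ! i)) else 0) = (if i \<in> S then rk G lt s b - i else 0)"
      by simp
  qed
  also have "\<dots> = (\<Sum>i\<in>{..<length ?es} \<inter> S. rk G lt s b - i)"
    by (rule sum.inter_restrict[symmetric]) simp
  also have "{..<length ?es} \<inter> S = S" using S by auto
  finally show ?thesis .
qed

lemma wr_take:
  assumes p: "is_path G lt s cs b a" and b: "b \<in> G" and j: "j \<le> length (path_edges cs)"
  shows "word_rank G lt s (take j (path_edges cs)) = Dg (rk G lt s b) j"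
  using wr_nths[OF p b, of "{..<j}"] j unfolding Dg_def by simp

lemma lead:
  assumes p: "is_path G lt s cs b a" and b: "b \<in> G" and j: "j \<le> length (path_edges cs)"
    and w: "Dg (rk G lt s b) j \<le> word_rank G lt s w"
  shows "(esym (path_edges cs) j w :: 'a::comm_ring_1) = (-1) ^ j * tmono (take j (path_edges cs)) w"
proof -
  let ?es = "path_edges cs"
  let ?R = "rk G lt s b"
  let ?L = "length ?es"
  have LR: "?L \<le> ?R" using is_path_len(1)[OF P p b] by (simp add: length_pe)
  have key: "S = {..<j}" if S: "S \<subseteq> {..<?L}" "card S = j" "nths ?es S = w" for S
  proof -
    have fS: "finite S" using S(1) finite_subset by blast
    have wr: "word_rank G lt s w = (\<Sum>i\<in>S. ?R - i)" using wr_nths[OF p b S(1)] S(3) by simp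
    have le: "\<forall>i\<in>S. i \<le> ?R" using S(1) LR by auto
    have e1: "(\<Sum>i\<in>S. ?R - i) + \<Sum>S = j * ?R" using sum_rev[OF fS le] S(2) by simp
    have e2: "Dg ?R j + \<Sum>{..<j} = j * ?R"
      using sum_rev[of "{..<j}" ?R] j LR unfolding Dg_def by auto
    have t: "(\<Sum>i<j. i) \<le> \<Sum>S \<and> (\<Sum>S = (\<Sum>i<j. i) \<longrightarrow> S = {..<j})" using tri_sum[OF fS] S(2) by simp
    have "\<Sum>S \<le> (\<Sum>i<j. i)" using e1 e2 w wr by linarith
    then show ?thesis using t by simp
  qed
  show ?thesis
  proof (cases "w = take j ?es")
    case True
    have "{S. S \<subseteq> {..<?L} \<and> card S = j \<and> nths ?es S = w} = {{..<j}}"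
    proof (intro set_eqI iffI)
      fix S assume "S \<in> {S. S \<subseteq> {..<?L} \<and> card S = j \<and> nths ?es S = w}"
      then show "S \<in> {{..<j}}" using key by blast
    next
      fix S assume "S \<in> {{..<j}}"
      then have "S = {..<j}" by simp
      then show "S \<in> {S. S \<subseteq> {..<?L} \<and> card S = j \<and> nths ?es S = w}"
        using True j by simp
    qed
    then show ?thesis unfolding esym_def using True by (simp add: tmono_def)
  next
    case False
    have E: "{S. S \<subseteq> {..<?L} \<and> card S = j \<and> nths ?es S = w} = {}"
    proof (intro set_eqI iffI)
      fix S assume S: "S \<in> {S. S \<subseteq> {..<?L} \<and> card S = j \<and> nths ?es S = w}"
      then have "S = {..<j}" using key by blast
      then have "w = take j ?es" using S by simp
      then show "S \<in> {}" using False by simp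
    qed simp
    show ?thesis unfolding esym_def E using False by (simp add: tmono_def)
  qed
qed

lemma rel_fil:
  assumes p1: "is_path G lt s cs1 b a" and p2: "is_path G lt s cs2 b a" and b: "b \<in> G"
    and ab: "lt a b" and j: "j \<le> rk G lt s b - rk G lt s a"
  shows "(\<lambda>w. tmono (take j (path_edges cs1)) w - tmono (take j (path_edges cs2)) w
      :: 'a::comm_ring_1) \<in> Fil G lt s (int (Dg (rk G lt s b) j) - 1)"
proof -
  have aG: "a \<in> G" using is_path_len(2)[OF P p1 b] .
  have L1: "length (path_edges cs1) = rk G lt s b - rk G lt s a"
    using is_path_len(1)[OF P p1 b] by (simp add: length_pe)
  have L2: "length (path_edges cs2) = rk G lt s b - rk G lt s a"
    using is_path_len(1)[OF P p2 b] by (simp add: length_pe)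
  define r :: "('v \<times> 'v) list \<Rightarrow> 'a" where "r = (\<lambda>w. esym (path_edges cs1) j w - esym (path_edges cs2) j w)"
  have "r \<in> rels G lt s"
    unfolding rels_def mem_Collect_eq
    apply (rule exI[of _ a], rule exI[of _ b], rule exI[of _ cs1], rule exI[of _ cs2], rule exI[of _ j])
    using aG b ab p1 p2 j unfolding rdist_def r_def by simp
  then have "r \<in> AI G lt s" unfolding AI_def by (rule two_sided_ideal.gen)
  then have y: "(\<lambda>w. (-1) ^ j * r w) \<in> AI G lt s" by (rule AI_scal)
  have s1: "set (take j (path_edges cs1)) \<subseteq> edges G lt s"
    by (rule order_trans[OF set_take_subset path_edges_sub[OF p1]])
  have s2: "set (take j (path_edges cs2)) \<subseteq> edges G lt s"
    by (rule order_trans[OF set_take_subset path_edges_sub[OF p2]])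
  show ?thesis
  proof (rule Fil_I[OF in_TW_diff[OF in_TW_tmono[OF s1] in_TW_tmono[OF s2]] y])
    fix w
    assume ne: "tmono (take j (path_edges cs1)) w - tmono (take j (path_edges cs2)) w - (-1) ^ j * r w \<noteq> (0::'a)"
    show "int (word_rank G lt s w) \<le> int (Dg (rk G lt s b) j) - 1"
    proof (rule ccontr)
      assume "\<not> ?thesis"
      then have w: "Dg (rk G lt s b) j \<le> word_rank G lt s w" by simp
      have "(esym (path_edges cs1) j w :: 'a) = (-1) ^ j * tmono (take j (path_edges cs1)) w"
        using lead[OF p1 b _ w] j L1 by simp
      moreover have "(esym (path_edges cs2) j w :: 'a) = (-1) ^ j * tmono (take j (path_edges cs2)) w"
        using lead[OF p2 b _ w] j L2 by simp
      ultimately have "(-1) ^ j * r w = ((-1) ^ j * (-1) ^ j) * (tmono (take j (path_edges cs1)) w - tmono (take j (path_edges cs2)) w)"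
        unfolding r_def by (simp add: algebra_simps)
      then have "(-1) ^ j * r w = tmono (take j (path_edges cs1)) w - tmono (take j (path_edges cs2)) w"
        by (simp only: minus_one_sq mult_1)
      then show False using ne by simp
    qed
  qed
qed

end


context
  fixes G :: "'v set" and lt :: "'v \<Rightarrow> 'v \<Rightarrow> bool" and s :: 'v and dist :: "'v \<Rightarrow> 'v"
  assumes P: "finite_ranked_poset G lt s"
    and D: "\<forall>y\<in>G - {s}. covers G lt s y (dist y)"
begin

lemma X_fil:
  assumes b: "b \<in> G" and b1: "b1 \<in> G" and b0: "b0 \<in> G" and l1: "lt b1 b" and l0: "lt b0 b1"
  shows "(\<lambda>w. tmono (dpath_edges dist b (rk G lt s b - rk G lt s b1) @ dpath_edges dist b1 (rk G lt s b1 - rk G lt s b0)) w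
            - tmono (dpath_edges dist b (rk G lt s b - rk G lt s b0)) w :: 'a::comm_ring_1)
     \<in> Fil G lt s (int (Dg (rk G lt s b) (rk G lt s b - rk G lt s b0)) - 1)"
proof -
  define R where "R = rk G lt s b"
  define r1 where "r1 = rk G lt s b1"
  define r0 where "r0 = rk G lt s b0"
  have r1R: "r1 < R" unfolding R_def r1_def by (rule rk_mono[OF P b1 b l1])
  have r01: "r0 < r1" unfolding r0_def r1_def by (rule rk_mono[OF P b0 b1 l0])
  define k where "k = R - r1"
  define k' where "k' = r1 - r0"
  have kk: "R - r0 = k + k'" unfolding k_def k'_def using r1R r01 by simp
  define u where "u = dpath_edges dist b k"
  define v where "v = dpath_edges dist b1 k'"
  define u3 where "u3 = dpath_edges dist b (k + k')"
  have bs: "b \<noteq> s" using l1 smin[OF P b1] by auto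
  have sb: "lt s b" using above_s[OF P b] bs by simp
  have rks: "rk G lt s s = 0" by (rule rk_s[OF P])
  define P1 where "P1 = dvs dist b R"
  have p1: "is_path G lt s P1 b s"
    unfolding P1_def using dvs_path[OF P D b, of R] dist_end[OF P D b] unfolding R_def by simp
  have pe1: "path_edges P1 = dpath_edges dist b R" unfolding P1_def by (rule pe_dvs[OF P])
  obtain sig where sig: "is_path G lt s sig b b1" "length sig = Suc k"
    using cover_path[OF P b1 b l1] unfolding k_def R_def r1_def by blast
  have lsig: "length (path_edges sig) = k" using sig(2) by (simp add: length_pe)
  define tau where "tau = dvs dist b1 r1"
  have pt: "is_path G lt s tau b1 s"
    unfolding tau_def using dvs_path[OF P D b1, of r1] dist_end[OF P D b1] unfolding r1_def by simp
  have pet: "path_edges tau = dpath_edges dist b1 r1" unfolding tau_def by (rule pe_dvs[OF P])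
  define P2 where "P2 = sig @ tl tau"
  have p2: "is_path G lt s P2 b s" unfolding P2_def by (rule is_path_append(1)[OF sig(1) pt])
  have pe2: "path_edges P2 = path_edges sig @ dpath_edges dist b1 r1"
    unfolding P2_def using is_path_append(2)[OF sig(1) pt] pet by simp
  have "(\<lambda>w. tmono (take k (path_edges P1)) w - tmono (take k (path_edges P2)) w :: 'a)
     \<in> Fil G lt s (int (Dg R k) - 1)"
    using rel_fil[OF P p1 p2 b sb, of k] rks unfolding R_def k_def by simp
  moreover have "take k (path_edges P1) = u" unfolding pe1 u_def k_def by (rule take_dpath) simp
  moreover have "take k (path_edges P2) = path_edges sig" unfolding pe2 using lsig by simp
  ultimately have i: "(\<lambda>w. tmono u w - tmono (path_edges sig) w :: 'a) \<in> Fil G lt s (int (Dg R k) - 1)"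
    by simp
  have "(\<lambda>w. tmono (take (k + k') (path_edges P1)) w - tmono (take (k + k') (path_edges P2)) w :: 'a)
     \<in> Fil G lt s (int (Dg R (k + k')) - 1)"
  proof -
    have "k + k' \<le> rk G lt s b - rk G lt s s" using kk rks unfolding R_def by simp
    from rel_fil[OF P p1 p2 b sb this] show ?thesis unfolding R_def .
  qed
  moreover have "take (k + k') (path_edges P1) = u3" unfolding pe1 u3_def
    by (rule take_dpath) (use kk in simp)
  moreover have "take (k + k') (path_edges P2) = path_edges sig @ v"
    unfolding pe2 v_def using lsig take_dpath[of k' r1 dist b1] unfolding k'_def by simp
  ultimately have ii: "(\<lambda>w. tmono u3 w - tmono (path_edges sig @ v) w :: 'a) \<in> Fil G lt s (int (Dg R (k + k')) - 1)"
    by simp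
  have lt': "length (path_edges tau) = r1" unfolding pet dpath_edges_def by simp
  have vt: "v = take k' (path_edges tau)" unfolding pet v_def k'_def by (rule take_dpath[symmetric]) simp
  have "set v \<subseteq> edges G lt s" unfolding vt
    by (rule order_trans[OF set_take_subset path_edges_sub[OF pt]])
  moreover have "word_rank G lt s v = Dg r1 k'" unfolding vt r1_def
    by (rule wr_take[OF P pt b1]) (use lt' k'_def r1_def in simp)
  ultimately have iii: "(tmono v :: _ \<Rightarrow> 'a) \<in> Fil G lt s (int (Dg r1 k'))"
    by (intro Fil_tmono) simp_all
  have iv: "tmul (\<lambda>w. tmono u w - tmono (path_edges sig) w :: 'a) (tmono v) \<in> Fil G lt s (int (Dg R k) - 1 + int (Dg r1 k'))"
    by (rule Fil_mult[OF i iii])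
  have eqiv: "tmul (\<lambda>w. tmono u w - tmono (path_edges sig) w :: 'a) (tmono v) = (\<lambda>w. tmono (u @ v) w - tmono (path_edges sig @ v) w)"
    by (rule ext) (simp add: tmul_diff_left tmul_tmono_tmono)
  have dd: "int (Dg R k) - 1 + int (Dg r1 k') = int (Dg R (k + k')) - 1"
    using Dg_add[of R k k'] unfolding k_def using r1R by simp
  have iv': "(\<lambda>w. tmono (u @ v) w - tmono (path_edges sig @ v) w :: 'a) \<in> Fil G lt s (int (Dg R (k + k')) - 1)"
    using iv unfolding eqiv dd .
  have "(\<lambda>w. (\<lambda>w. tmono (u @ v) w - tmono (path_edges sig @ v) w) w - (\<lambda>w. tmono u3 w - tmono (path_edges sig @ v) w) w :: 'a)
     \<in> Fil G lt s (int (Dg R (k + k')) - 1)"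
    by (rule Fil_diff[OF iv' ii])
  then have "(\<lambda>w. tmono (u @ v) w - tmono u3 w :: 'a) \<in> Fil G lt s (int (Dg R (k + k')) - 1)"
    by simp
  then show ?thesis unfolding u_def v_def u3_def k_def k'_def R_def r1_def r0_def kk[unfolded R_def r0_def k_def k'_def r1_def] .
qed

end


context
  fixes G :: "'v set" and lt :: "'v \<Rightarrow> 'v \<Rightarrow> bool" and s :: 'v and dist :: "'v \<Rightarrow> 'v"
  assumes P: "finite_ranked_poset G lt s"
    and D: "\<forall>y\<in>G - {s}. covers G lt s y (dist y)"
begin

lemma key_fil:
  fixes g :: "('v, 'a::comm_ring_1) Arep"
  assumes b: "b \<in> G" and b1: "b1 \<in> G" and b0: "b0 \<in> G" and l1: "lt b1 b" and l0: "lt b0 b1"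
    and g: "\<forall>m. g m \<in> Fil G lt s (int m)"
  shows "(\<lambda>w. amul (amul g (fA G lt s dist b b1)) (fA G lt s dist b1 b0) m w - amul g (fA G lt s dist b b0) m w)
     \<in> Fil G lt s (int m - 1)"
proof -
  define R where "R = rk G lt s b"
  define r1 where "r1 = rk G lt s b1"
  define r0 where "r0 = rk G lt s b0"
  have r1R: "r1 < R" unfolding R_def r1_def by (rule rk_mono[OF P b1 b l1])
  have r01: "r0 < r1" unfolding r0_def r1_def by (rule rk_mono[OF P b0 b1 l0])
  define k where "k = R - r1"
  define k' where "k' = r1 - r0"
  have kk: "R - r0 = k + k'" unfolding k_def k'_def using r1R r01 by simp
  define u where "u = dpath_edges dist b k"
  define v where "v = dpath_edges dist b1 k'"
  define u3 where "u3 = dpath_edges dist b (k + k')"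
  define d1 where "d1 = Dg R k"
  define d2 where "d2 = Dg r1 k'"
  define DD where "DD = Dg R (k + k')"
  have dsum: "d1 + d2 = DD" unfolding d1_def d2_def DD_def using Dg_add[of R k k'] r1R unfolding k_def by simp
  have X: "(\<lambda>w. tmono (u @ v) w - tmono u3 w :: 'a) \<in> Fil G lt s (int DD - 1)"
    using X_fil[OF P D b b1 b0 l1 l0] kk unfolding u_def v_def u3_def DD_def k_def k'_def R_def r1_def r0_def
    by simp
  have F1: "fA G lt s dist b b1 = (\<lambda>m. if m = d1 then tmono u else (\<lambda>_. 0))"
  proof -
    have "k * R - k * (k - 1) div 2 = d1" unfolding d1_def by (rule Dg_formula) (simp add: k_def)
    then show ?thesis unfolding fA_def eprime_def rdist_def u_def
      R_def[symmetric] r1_def[symmetric] k_def[symmetric] by simp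
  qed
  have F2: "fA G lt s dist b1 b0 = (\<lambda>m. if m = d2 then tmono v else (\<lambda>_. 0))"
  proof -
    have "k' * r1 - k' * (k' - 1) div 2 = d2" unfolding d2_def by (rule Dg_formula) (simp add: k'_def)
    then show ?thesis unfolding fA_def eprime_def rdist_def v_def
      r0_def[symmetric] r1_def[symmetric] k'_def[symmetric] by simp
  qed
  have F3: "fA G lt s dist b b0 = (\<lambda>m. if m = DD then tmono u3 else (\<lambda>_. 0))"
  proof -
    have "(k + k') * R - (k + k') * (k + k' - 1) div 2 = DD" unfolding DD_def
      by (rule Dg_formula) (use kk in simp)
    then show ?thesis unfolding fA_def eprime_def rdist_def u3_def
      R_def[symmetric] r0_def[symmetric] kk by simp
  qed
  have A1: "amul g (fA G lt s dist b b1) = (\<lambda>m' w. if d1 \<le> m' then tmul (g (m' - d1)) (tmono u) w else 0)"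
    unfolding F1 by (intro ext) (rule amul_mono_right)
  have L: "amul (amul g (fA G lt s dist b b1)) (fA G lt s dist b1 b0) m w =
      (if d2 \<le> m then tmul (amul g (fA G lt s dist b b1) (m - d2)) (tmono v) w else 0)" for w
    unfolding F2 by (rule amul_mono_right)
  have R3: "amul g (fA G lt s dist b b0) m w = (if DD \<le> m then tmul (g (m - DD)) (tmono u3) w else 0)" for w
    unfolding F3 by (rule amul_mono_right)
  show ?thesis
  proof (cases "DD \<le> m")
    case True
    then have "d2 \<le> m" "d1 \<le> m - d2" "m - d2 - d1 = m - DD" using dsum by auto
    then have "amul g (fA G lt s dist b b1) (m - d2) = tmul (g (m - DD)) (tmono u)"
      unfolding A1 by (intro ext) simp
    then have "amul (amul g (fA G lt s dist b b1)) (fA G lt s dist b1 b0) m w = tmul (g (m - DD)) (tmono (u @ v)) w" for w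
      unfolding L using \<open>d2 \<le> m\<close> by (simp add: tmul_mono_mono)
    then have eq: "(\<lambda>w. amul (amul g (fA G lt s dist b b1)) (fA G lt s dist b1 b0) m w - amul g (fA G lt s dist b b0) m w)
        = tmul (g (m - DD)) (\<lambda>w. tmono (u @ v) w - tmono u3 w)"
      unfolding R3 using True by (intro ext) (simp add: tmul_diff_right)
    have "tmul (g (m - DD)) (\<lambda>w. tmono (u @ v) w - tmono u3 w) \<in> Fil G lt s (int (m - DD) + (int DD - 1))"
      by (rule Fil_mult[OF spec[OF g] X])
    moreover have "int (m - DD) + (int DD - 1) = int m - 1" using True by simp
    ultimately show ?thesis unfolding eq by simp
  next
    case False
    have "amul (amul g (fA G lt s dist b b1)) (fA G lt s dist b1 b0) m w = 0" for w
    proof (cases "d2 \<le> m")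
      case True
      then have "\<not> d1 \<le> m - d2" using False dsum by auto
      then have "amul g (fA G lt s dist b b1) (m - d2) = (\<lambda>w. 0)" unfolding A1 by (intro ext) simp
      then show ?thesis unfolding L using True by (simp add: tmul_zero_left)
    next
      case False then show ?thesis unfolding L by simp
    qed
    moreover have "amul g (fA G lt s dist b b0) m w = 0" for w unfolding R3 using False by simp
    ultimately show ?thesis by (simp add: Fil_zero)
  qed
qed

end


lemma length_del_at: "i < length xs \<Longrightarrow> length (del_at i xs) = length xs - 1"
  unfolding del_at_def by simp

lemma del_at_nth: "i < length xs \<Longrightarrow> k < length xs - 1 \<Longrightarrow>
   del_at i xs ! k = xs ! (if k < i then k else Suc k)"
  unfolding del_at_def by (auto simp: nth_append min_def)

lemma del_at_comm:
  assumes ij: "i \<le> j" and j: "Suc j < length xs"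
  shows "del_at i (del_at (Suc j) xs) = del_at j (del_at i xs)"
proof (rule nth_equalityI)
  have l1: "length (del_at (Suc j) xs) = length xs - 1" using j by (simp add: length_del_at)
  have l2: "length (del_at i xs) = length xs - 1" using ij j by (simp add: length_del_at)
  show "length (del_at i (del_at (Suc j) xs)) = length (del_at j (del_at i xs))"
    using l1 l2 ij j by (simp add: length_del_at)
  fix k assume k: "k < length (del_at i (del_at (Suc j) xs))"
  then have k': "k < length xs - 2" using l1 ij j by (simp add: length_del_at)
  have "del_at i (del_at (Suc j) xs) ! k = del_at (Suc j) xs ! (if k < i then k else Suc k)"
    using l1 ij j k' by (intro del_at_nth) auto
  also have "\<dots> = xs ! (if (if k < i then k else Suc k) < Suc j then (if k < i then k else Suc k) else Suc (if k < i then k else Suc k))"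
    using ij j k' by (intro del_at_nth) auto
  also have "\<dots> = xs ! (if (if k < j then k else Suc k) < i then (if k < j then k else Suc k) else Suc (if k < j then k else Suc k))"
    using ij by (intro arg_cong[where f="(!) xs"]) auto
  also have "\<dots> = del_at i xs ! (if k < j then k else Suc k)"
    using ij j k' by (intro del_at_nth[symmetric]) auto
  also have "\<dots> = del_at j (del_at i xs) ! k"
    using l2 ij j k' by (intro del_at_nth[symmetric]) auto
  finally show "del_at i (del_at (Suc j) xs) ! k = del_at j (del_at i xs) ! k" .
qed

lemma simplicial:
  fixes \<Phi> :: "'x list \<Rightarrow> 'a::comm_ring_1"
  shows "(\<Sum>i<length cs. \<Sum>j<length cs - 1. (-1) ^ i * ((-1) ^ j * \<Phi> (del_at j (del_at i cs)))) = 0"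
proof -
  define L where "L = length cs"
  define F where "F = (\<lambda>(i, j). (-1) ^ i * ((-1) ^ j * \<Phi> (del_at j (del_at i cs))))"
  define Q1 where "Q1 = {(i, j). i < L \<and> j < L - 1 \<and> i \<le> j}"
  define Q2 where "Q2 = {(i, j). i < L \<and> j < L - 1 \<and> j < i}"
  have fin: "finite Q1" "finite Q2"
    unfolding Q1_def Q2_def by (rule finite_subset[of _ "{..<L} \<times> {..<L - 1}"], auto)+
  have "(\<Sum>i<L. \<Sum>j<L - 1. (-1) ^ i * ((-1) ^ j * \<Phi> (del_at j (del_at i cs)))) = (\<Sum>p\<in>{..<L} \<times> {..<L - 1}. F p)"
    unfolding F_def by (simp add: sum.cartesian_product)
  also have "{..<L} \<times> {..<L - 1} = Q1 \<union> Q2" unfolding Q1_def Q2_def by auto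
  also have "(\<Sum>p\<in>Q1 \<union> Q2. F p) = (\<Sum>p\<in>Q1. F p) + (\<Sum>p\<in>Q2. F p)"
    by (rule sum.union_disjoint) (use fin in \<open>auto simp: Q1_def Q2_def\<close>)
  also have "(\<Sum>p\<in>Q2. F p) = (\<Sum>p\<in>Q1. F ((\<lambda>(i, j). (Suc j, i)) p))"
  proof (rule sum.reindex_bij_betw[symmetric])
    show "bij_betw (\<lambda>(i, j). (Suc j, i)) Q1 Q2"
    proof (rule bij_betw_byWitness[where f' = "\<lambda>(i, j). (j, i - 1)"])
      show "\<forall>a\<in>Q1. (\<lambda>(i, j). (j, i - 1)) ((\<lambda>(i, j). (Suc j, i)) a) = a" by auto
      show "\<forall>a'\<in>Q2. (\<lambda>(i, j). (Suc j, i)) ((\<lambda>(i, j). (j, i - 1)) a') = a'" unfolding Q2_def by auto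
      show "(\<lambda>(i, j). (Suc j, i)) ` Q1 \<subseteq> Q2" unfolding Q1_def Q2_def by auto
      show "(\<lambda>(i, j). (j, i - 1)) ` Q2 \<subseteq> Q1" unfolding Q1_def Q2_def by auto
    qed
  qed
  also have "(\<Sum>p\<in>Q1. F ((\<lambda>(i, j). (Suc j, i)) p)) = (\<Sum>p\<in>Q1. - F p)"
  proof (rule sum.cong[OF refl])
    fix p assume "p \<in> Q1"
    then obtain i j where p: "p = (i, j)" "i \<le> j" "Suc j < L" unfolding Q1_def by auto
    have "del_at i (del_at (Suc j) cs) = del_at j (del_at i cs)"
      using p L_def by (intro del_at_comm) auto
    then show "F ((\<lambda>(i, j). (Suc j, i)) p) = - F p"
      unfolding p F_def by (simp add: algebra_simps)
  qed
  also have "(\<Sum>p\<in>Q1. F p) + (\<Sum>p\<in>Q1. - F p) = 0" by (simp add: sum_negf)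
  finally show ?thesis unfolding L_def .
qed

lemma dcoef_expand:
  "(dcoef G lt s dist (b, q, cs) c' :: ('v, 'a::comm_ring_1) Arep) = (\<lambda>m w.
     (if c' = (hd cs, q - rdist G lt s b (hd cs), tl cs) then fA G lt s dist b (hd cs) m w else 0)
     - (\<Sum>i<length cs. if c' = (b, q, del_at i cs) then (-1) ^ i * aone m w else 0))"
proof (intro ext)
  fix m and w :: "('v \<times> 'v) list"
  have "(\<Sum>i<length cs. if c' = (b, q, del_at i cs) then - ((-1) ^ i * aone m w) else 0)
      = - (\<Sum>i<length cs. if c' = (b, q, del_at i cs) then (-1) ^ i * aone m w else (0::'a))"
    by (simp add: sum_negf[symmetric] if_distrib cong: if_cong)
  then show "(dcoef G lt s dist (b, q, cs) c' m w :: 'a::comm_ring_1) =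
     (if c' = (hd cs, q - rdist G lt s b (hd cs), tl cs) then fA G lt s dist b (hd cs) m w else 0)
     - (\<Sum>i<length cs. if c' = (b, q, del_at i cs) then (-1) ^ i * aone m w else 0)"
    unfolding dcoef_def aadd_def azero_def by simp
qed

lemma amul_zero_right: "amul g (\<lambda>m w. 0) m w = (0::'a::comm_ring_1)"
  unfolding amul_def tmul_def by simp

lemma amul_dcoef:
  fixes g :: "('v, 'a::comm_ring_1) Arep"
  shows "amul g (dcoef G lt s dist (b, q, cs) c') m w =
     (if c' = (hd cs, q - rdist G lt s b (hd cs), tl cs) then amul g (fA G lt s dist b (hd cs)) m w else 0)
     - (\<Sum>i<length cs. if c' = (b, q, del_at i cs) then (-1) ^ i * g m w else 0)"
  unfolding dcoef_expand
  by (simp add: amul_diff_right amul_if_right amul_sum_right amul_scal_right amul_aone_right cong: if_cong)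


lemma del_at_0: "del_at 0 (x # xs) = xs" unfolding del_at_def by simp
lemma del_at_Suc: "del_at (Suc i) (x # xs) = x # del_at i xs" unfolding del_at_def by simp

lemma if_mult_0: "(if P then a * X else (0::'a::comm_ring_1)) = a * (if P then X else 0)" by simp

lemma PC:
  fixes g :: "('v, 'a::comm_ring_1) Arep"
  assumes fin: "finite Tg"
    and T0in: "(b1, q - rdist G lt s b b1, b0 # rest) \<in> Tg"
    and Tiin: "\<forall>i<length (b1 # b0 # rest). (b, q, del_at i (b1 # b0 # rest)) \<in> Tg"
    and qeq: "q - rdist G lt s b b1 - rdist G lt s b1 b0 = q - rdist G lt s b b0"
  shows "(\<Sum>c2\<in>Tg. amul (amul g (dcoef G lt s dist (b, q, b1 # b0 # rest) c2)) (dcoef G lt s dist c2 c') m w) =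
    (if c' = (b0, q - rdist G lt s b b0, rest)
     then amul (amul g (fA G lt s dist b b1)) (fA G lt s dist b1 b0) m w - amul g (fA G lt s dist b b0) m w else 0)"
proof -
  define cs where "cs = b1 # b0 # rest"
  define L where "L = length cs"
  define q1 where "q1 = q - rdist G lt s b b1"
  define t0 where "t0 = (b1, q1, b0 # rest)"
  define ti where "ti = (\<lambda>i. (b, q, del_at i cs))"
  define F1 where "F1 = (fA G lt s dist b b1 :: ('v, 'a) Arep)"
  define F2 where "F2 = (fA G lt s dist b1 b0 :: ('v, 'a) Arep)"
  define F3 where "F3 = (fA G lt s dist b b0 :: ('v, 'a) Arep)"
  have L2: "L = Suc (Suc (length rest))" unfolding L_def cs_def by simp
  have g1: "amul g (dcoef G lt s dist (b, q, cs) c2) = (\<lambda>m w. (if c2 = t0 then amul g F1 m w else 0)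
      - (\<Sum>i<L. if c2 = ti i then (-1) ^ i * g m w else 0))" for c2
    unfolding t0_def ti_def F1_def q1_def L_def by (intro ext) (simp add: amul_dcoef cs_def)
  have s1: "amul (amul g (dcoef G lt s dist (b, q, cs) c2)) (dcoef G lt s dist c2 c') m w =
      (if c2 = t0 then amul (amul g F1) (dcoef G lt s dist c2 c') m w else 0)
      - (\<Sum>i<L. if c2 = ti i then (-1) ^ i * amul g (dcoef G lt s dist c2 c') m w else 0)" for c2
    unfolding g1 by (simp add: amul_diff_left amul_if_left amul_sum_left amul_scal_left cong: if_cong)
  have "(\<Sum>c2\<in>Tg. amul (amul g (dcoef G lt s dist (b, q, cs) c2)) (dcoef G lt s dist c2 c') m w)
      = (\<Sum>c2\<in>Tg. if c2 = t0 then amul (amul g F1) (dcoef G lt s dist c2 c') m w else 0)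
      - (\<Sum>c2\<in>Tg. \<Sum>i<L. if c2 = ti i then (-1) ^ i * amul g (dcoef G lt s dist c2 c') m w else 0)"
    unfolding s1 by (simp add: sum_subtractf)
  also have "(\<Sum>c2\<in>Tg. if c2 = t0 then amul (amul g F1) (dcoef G lt s dist c2 c') m w else 0)
      = amul (amul g F1) (dcoef G lt s dist t0 c') m w"
    using T0in fin unfolding t0_def q1_def by (simp add: sum.delta)
  also have "(\<Sum>c2\<in>Tg. \<Sum>i<L. if c2 = ti i then (-1) ^ i * amul g (dcoef G lt s dist c2 c') m w else 0)
      = (\<Sum>i<L. \<Sum>c2\<in>Tg. if c2 = ti i then (-1) ^ i * amul g (dcoef G lt s dist c2 c') m w else 0)"
    by (rule sum.swap)
  also have "\<dots> = (\<Sum>i<L. (-1) ^ i * amul g (dcoef G lt s dist (ti i) c') m w)"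
  proof (rule sum.cong[OF refl])
    fix i assume "i \<in> {..<L}"
    then have "ti i \<in> Tg" using Tiin unfolding ti_def L_def cs_def by simp
    then show "(\<Sum>c2\<in>Tg. if c2 = ti i then (-1) ^ i * amul g (dcoef G lt s dist c2 c') m w else 0)
       = (-1) ^ i * amul g (dcoef G lt s dist (ti i) c') m w"
      using fin by (simp add: sum.delta)
  qed
  finally have e2: "(\<Sum>c2\<in>Tg. amul (amul g (dcoef G lt s dist (b, q, cs) c2)) (dcoef G lt s dist c2 c') m w)
      = amul (amul g F1) (dcoef G lt s dist t0 c') m w - (\<Sum>i<L. (-1) ^ i * amul g (dcoef G lt s dist (ti i) c') m w)" .
  define A where "A = (if c' = (b0, q1 - rdist G lt s b1 b0, rest) then amul (amul g F1) F2 m w else 0)"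
  define HS where "HS = (\<lambda>i. if c' = (b1, q1, del_at i (b0 # rest)) then amul g F1 m w else 0)"
  define H0 where "H0 = (if c' = (b0, q - rdist G lt s b b0, rest) then amul g F3 m w else 0)"
  define \<Phi> where "\<Phi> = (\<lambda>l. if c' = (b, q, l) then g m w else 0)"
  have t0e: "amul (amul g F1) (dcoef G lt s dist t0 c') m w = A - (\<Sum>j<L - 1. (-1) ^ j * HS j)"
    unfolding t0_def amul_dcoef A_def HS_def F2_def L2
    by (simp add: if_mult_0 amul_dcoef cong: if_cong)
  have tie: "amul g (dcoef G lt s dist (ti i) c') m w = (if i = 0 then H0 else HS (i - 1))
      - (\<Sum>j<L - 1. (-1) ^ j * \<Phi> (del_at j (del_at i cs)))" if i: "i < L" for i
  proof -
    have ld: "length (del_at i cs) = L - 1" using i unfolding L_def by (simp add: length_del_at)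
    show ?thesis
    proof (cases i)
      case 0
      then show ?thesis unfolding ti_def amul_dcoef H0_def \<Phi>_def ld
        by (simp add: cs_def del_at_0 F3_def if_mult_0 cong: if_cong)
    next
      case (Suc i')
      then show ?thesis unfolding ti_def amul_dcoef HS_def \<Phi>_def ld
        by (simp add: cs_def del_at_Suc F1_def q1_def if_mult_0 cong: if_cong)
    qed
  qed
  have "(\<Sum>i<L. (-1) ^ i * amul g (dcoef G lt s dist (ti i) c') m w)
      = (\<Sum>i<L. (-1) ^ i * (if i = 0 then H0 else HS (i - 1)))
        - (\<Sum>i<L. \<Sum>j<L - 1. (-1) ^ i * ((-1) ^ j * \<Phi> (del_at j (del_at i cs))))"
    by (simp add: tie right_diff_distrib sum_subtractf sum_distrib_left)
  also have "(\<Sum>i<L. \<Sum>j<L - 1. (-1) ^ i * ((-1) ^ j * \<Phi> (del_at j (del_at i cs)))) = (0::'a)"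
    using simplicial[of \<Phi> cs] unfolding L_def .
  also have "(\<Sum>i<L. (-1) ^ i * (if i = 0 then H0 else HS (i - 1))) = H0 - (\<Sum>j<L - 1. (-1) ^ j * HS j)"
    unfolding L2 by (subst sum.lessThan_Suc_shift) (simp add: sum_negf del: sum.lessThan_Suc)
  finally have e3: "(\<Sum>i<L. (-1) ^ i * amul g (dcoef G lt s dist (ti i) c') m w) = H0 - (\<Sum>j<L - 1. (-1) ^ j * HS j)"
    by simp
  have "(\<Sum>c2\<in>Tg. amul (amul g (dcoef G lt s dist (b, q, cs) c2)) (dcoef G lt s dist c2 c') m w) = A - H0"
    unfolding e2 t0e e3 by simp
  also have "A - H0 = (if c' = (b0, q - rdist G lt s b b0, rest)
     then amul (amul g F1) F2 m w - amul g F3 m w else 0)"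
    unfolding A_def H0_def q1_def qeq by simp
  finally show ?thesis unfolding cs_def F1_def F2_def F3_def .
qed


definition targets :: "'v set \<Rightarrow> ('v \<Rightarrow> 'v \<Rightarrow> bool) \<Rightarrow> 'v \<Rightarrow> 'v \<times> nat \<times> 'v list \<Rightarrow> ('v \<times> nat \<times> 'v list) set" where
  "targets G lt s c = (case c of (b, q, cs) \<Rightarrow>
     insert (hd cs, q - rdist G lt s b (hd cs), tl cs) ((\<lambda>i. (b, q, del_at i cs)) ` {..<length cs}))"

lemma finite_targets: "finite (targets G lt s c)"
  unfolding targets_def by (cases c) auto

lemma dcoef_out:
  fixes g :: "('v, 'a::comm_ring_1) Arep"
  assumes "c2 \<notin> targets G lt s c"
  shows "amul g (dcoef G lt s dist c c2) m w = 0"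
proof -
  obtain b q cs where c: "c = (b, q, cs)" by (cases c) auto
  have "c2 \<noteq> (hd cs, q - rdist G lt s b (hd cs), tl cs)" "\<forall>i<length cs. c2 \<noteq> (b, q, del_at i cs)"
    using assms unfolding c targets_def by auto
  then show ?thesis unfolding c amul_dcoef by simp
qed

theorem lemma3p4:
  fixes G :: "'v set" and lt :: "'v \<Rightarrow> 'v \<Rightarrow> bool" and s :: 'v
    and dist :: "'v \<Rightarrow> 'v" and n :: nat
    and x :: "'v \<times> nat \<times> 'v list \<Rightarrow> ('v, 'a::field) Arep"
  assumes "finite_ranked_poset G lt s"
    and "\<forall>y\<in>G - {s}. covers G lt s y (dist y)"
    and "finite {c. x c \<noteq> azero}"
    and "\<forall>c. x c \<noteq> azero \<longrightarrow> is_basis_chain G lt s c \<and> length (snd (snd c)) = n + 2"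
    and "\<forall>c. is_Arep G lt s (x c)"
  shows "\<forall>c'. Aeq G lt s (Dmap G lt s dist (Dmap G lt s dist x) c') azero"
proof
  note P = assms(1) and D = assms(2)
  fix c'
  define X where "X = {c. x c \<noteq> azero}"
  have finX: "finite X" unfolding X_def by (rule assms(3))
  define Tg where "Tg = (\<Union>c\<in>X. targets G lt s c)"
  have finT: "finite Tg" unfolding Tg_def using finX finite_targets by (intro finite_UN_I) auto
  define y where "y = Dmap G lt s dist x"
  have ydef: "y c2 m w = (\<Sum>c\<in>X. amul (x c) (dcoef G lt s dist c c2) m w)" for c2 m w
    unfolding y_def Dmap_def X_def by simp
  have Y0: "{c2. y c2 \<noteq> azero} \<subseteq> Tg"
  proof
    fix c2 assume "c2 \<in> {c2. y c2 \<noteq> azero}"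
    then have ne: "y c2 \<noteq> azero" by simp
    show "c2 \<in> Tg"
    proof (rule ccontr)
      assume "c2 \<notin> Tg"
      then have "\<forall>c\<in>X. c2 \<notin> targets G lt s c" unfolding Tg_def by blast
      then have "y c2 m w = 0" for m w unfolding ydef by (simp add: dcoef_out)
      then have "y c2 = azero" unfolding azero_def by (intro ext) simp
      then show False using ne by simp
    qed
  qed
  have main: "Dmap G lt s dist y c' m w =
      (\<Sum>c\<in>X. \<Sum>c2\<in>Tg. amul (amul (x c) (dcoef G lt s dist c c2)) (dcoef G lt s dist c2 c') m w)" for m w
  proof -
    have "Dmap G lt s dist y c' m w = (\<Sum>c2\<in>{c2. y c2 \<noteq> azero}. amul (y c2) (dcoef G lt s dist c2 c') m w)"
      unfolding Dmap_def by simp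
    also have "\<dots> = (\<Sum>c2\<in>Tg. amul (y c2) (dcoef G lt s dist c2 c') m w)"
    proof (rule sum.mono_neutral_left[OF finT Y0])
      show "\<forall>i\<in>Tg - {c2. y c2 \<noteq> azero}. amul (y i) (dcoef G lt s dist i c') m w = 0"
        by (auto simp: amul_azero_left)
    qed
    also have "\<dots> = (\<Sum>c2\<in>Tg. \<Sum>c\<in>X. amul (amul (x c) (dcoef G lt s dist c c2)) (dcoef G lt s dist c2 c') m w)"
    proof (rule sum.cong[OF refl])
      fix c2
      have "y c2 = (\<lambda>m w. \<Sum>c\<in>X. amul (x c) (dcoef G lt s dist c c2) m w)" by (intro ext) (rule ydef)
      then show "amul (y c2) (dcoef G lt s dist c2 c') m w =
          (\<Sum>c\<in>X. amul (amul (x c) (dcoef G lt s dist c c2)) (dcoef G lt s dist c2 c') m w)"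
        by (simp add: amul_sum_left)
    qed
    also have "\<dots> = (\<Sum>c\<in>X. \<Sum>c2\<in>Tg. amul (amul (x c) (dcoef G lt s dist c c2)) (dcoef G lt s dist c2 c') m w)"
      by (rule sum.swap)
    finally show ?thesis .
  qed
  show "Aeq G lt s (Dmap G lt s dist (Dmap G lt s dist x) c') azero"
    unfolding Aeq_def
  proof
    fix m
    have eq: "(\<lambda>w. Dmap G lt s dist (Dmap G lt s dist x) c' m w - azero m w) =
       (\<lambda>w. \<Sum>c\<in>X. (\<lambda>w. \<Sum>c2\<in>Tg. amul (amul (x c) (dcoef G lt s dist c c2)) (dcoef G lt s dist c2 c') m w) w)"
      using main unfolding y_def azero_def by simp
    have "(\<lambda>w. \<Sum>c\<in>X. (\<lambda>w. \<Sum>c2\<in>Tg. amul (amul (x c) (dcoef G lt s dist c c2)) (dcoef G lt s dist c2 c') m w) w)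
        \<in> Fil G lt s (int m - 1)"
    proof (rule Fil_sum[OF finX])
      fix c assume cX: "c \<in> X"
      then have "x c \<noteq> azero" unfolding X_def by simp
      then have bc: "is_basis_chain G lt s c" "length (snd (snd c)) = n + 2" using spec[OF assms(4), of c] by simp_all
      obtain b q cs where c: "c = (b, q, cs)" by (cases c) auto
      then obtain b1 b0 rest where cs: "cs = b1 # b0 # rest" using bc(2)
        by (cases cs; cases "tl cs") auto
      have bG: "b \<in> G" and sorted: "sorted_wrt (\<lambda>x y. lt y x) cs" and sub: "set cs \<subseteq> Gamma_bq G lt s b q"
        using bc(1) unfolding c is_basis_chain_def by auto
      have b1: "b1 \<in> G" "lt b1 b" using sub unfolding cs Gamma_bq_def by auto
      have b0: "b0 \<in> G" "lt b0 b1" using sub sorted unfolding cs Gamma_bq_def by auto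
      have r1: "rk G lt s b1 < rk G lt s b" by (rule rk_mono[OF P b1(1) bG b1(2)])
      have r0: "rk G lt s b0 < rk G lt s b1" by (rule rk_mono[OF P b0(1) b1(1) b0(2)])
      have qeq: "q - rdist G lt s b b1 - rdist G lt s b1 b0 = q - rdist G lt s b b0"
        unfolding rdist_def using r1 r0 by simp
      have tc: "targets G lt s c \<subseteq> Tg" unfolding Tg_def using cX by blast
      have "(b1, q - rdist G lt s b b1, b0 # rest) \<in> targets G lt s c"
        unfolding c cs targets_def by simp
      then have T0in: "(b1, q - rdist G lt s b b1, b0 # rest) \<in> Tg" using tc by blast
      have "\<forall>i<length (b1 # b0 # rest). (b, q, del_at i (b1 # b0 # rest)) \<in> targets G lt s c"
        unfolding c cs targets_def by auto
      then have Tiin: "\<forall>i<length (b1 # b0 # rest). (b, q, del_at i (b1 # b0 # rest)) \<in> Tg" using tc by blast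
      have g: "\<forall>m. x c m \<in> Fil G lt s (int m)" using spec[OF assms(5), of c] unfolding is_Arep_def by simp
      have "(\<lambda>w. \<Sum>c2\<in>Tg. amul (amul (x c) (dcoef G lt s dist c c2)) (dcoef G lt s dist c2 c') m w)
         = (\<lambda>w. if c' = (b0, q - rdist G lt s b b0, rest)
            then amul (amul (x c) (fA G lt s dist b b1)) (fA G lt s dist b1 b0) m w - amul (x c) (fA G lt s dist b b0) m w else 0)"
        unfolding c cs by (intro ext PC[OF finT T0in Tiin qeq])
      also have "\<dots> \<in> Fil G lt s (int m - 1)"
      proof (cases "c' = (b0, q - rdist G lt s b b0, rest)")
        case True
        then show ?thesis using key_fil[OF P D bG b1(1) b0(1) b1(2) b0(2) g] by simp
      next
        case False
        then show ?thesis by (simp add: Fil_zero)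
      qed
      finally show "(\<lambda>w. \<Sum>c2\<in>Tg. amul (amul (x c) (dcoef G lt s dist c c2)) (dcoef G lt s dist c2 c') m w)
         \<in> Fil G lt s (int m - 1)" .
    qed
    then show "(\<lambda>w. Dmap G lt s dist (Dmap G lt s dist x) c' m w - azero m w) \<in> Fil G lt s (int m - 1)"
      unfolding eq .
  qed
qed


end
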